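(* Let $k\ge1$, $a,a_i,b_i,c_i\in\mathbb{C}$ ($1\le i\le k$) with $\prod_{j=1}^kc_j\neq0$ and $\prod_{j=1}^kb_j\neq0$, let $f$ be the symbol below and $T^a(f)=T(f)+a\,\mathbf{e}_1\mathbf{e}_1^{\top}$ the perturbed tridiagonal $k$-Toeplitz operator, and let $\lambda\in\mathbb{C}\setminus\sigma_{ess}(T^a(f))$. If $\sum_{j=1}^k\operatorname{wind}(\lambda_j(\mathbb{T}),\lambda)<0$, then there exist an eigenvector $\mathbf{x}$ of $T^a(f)$ associated to $\lambda$ and some $\rho<1$ such that $$\frac{|\mathbf{x}_j|}{\max_i|\mathbf{x}_i|}\le C\lceil j/k\rceil\rho^{\lceil j/k\rceil-1},\qquad j\ge1,$$ where $C>0$ depends only on $\lambda,a_j,b_j,c_j$, $j=1,\dots,k$. If $\sum_{j=1}^k\operatorname{wind}(\lambda_j(\mathbb{T}),\lambda)>0$, the same conclusion holds for left eigenvectors of $T^a(f)$ associated to $\lambda$.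
   Context: The tridiagonal $k$-Toeplitz operator $T(f)$ on $\ell^2(\mathbb{N})$ has matrix entries $(i,i)=a_{p(i)}$, $(i,i+1)=b_{p(i)}$, $(i+1,i)=c_{p(i)}$, $p(i)=((i-1)\bmod k)+1$, all other entries zero; $T^a(f)$ is the same operator with $(1,1)$ entry replaced by $a_1+a$. The symbol is $f(z)=A_{-1}z^{-1}+A_0+A_1z$, where $A_0$ is the $k\times k$ tridiagonal matrix with diagonal $a_1,\dots,a_k$, superdiagonal $b_1,\dots,b_{k-1}$, subdiagonal $c_1,\dots,c_{k-1}$; $A_{-1}$ has single nonzero entry $b_k$ at $(k,1)$; $A_1$ has single nonzero entry $c_k$ at $(1,k)$. $\mathbb{T}$ is the unit circle; $\sigma_{ess}$ denotes the essential spectrum (set of $\lambda$ with operator minus $\lambda$ not Fredholm). With $\lambda_1(z),\dots,\lambda_k(z)$ the eigenvalues of $f(z)$, $\sum_j\operatorname{wind}(\lambda_j(\mathbb{T}),\lambda)$ is the winding number about $0$ of $z\mapsto\det(f(z)-\lambda I)$ as $z$ traverses $\mathbb{T}$ counterclockwise. A left eigenvector is a nonzero $\mathbf{y}$ with $\mathbf{y}^\top T^a(f)=\lambda\mathbf{y}^\top$. *)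

theory Defs
  imports "HOL-Complex_Analysis.Complex_Analysis" "Jordan_Normal_Form.Determinant"
begin

text \<open>Vectors of l^2(N) are represented as functions nat => complex, stored 0-based:
  component i (i >= 0) here is the paper's component i+1.
  Coefficient sequences a, b, c are indexed 1..k as in the paper.\<close>

definition l2 :: "(nat \<Rightarrow> complex) \<Rightarrow> bool" where
  "l2 x \<longleftrightarrow> summable (\<lambda>i. (cmod (x i))\<^sup>2)"

definition l2norm :: "(nat \<Rightarrow> complex) \<Rightarrow> real" where
  "l2norm x = sqrt (\<Sum>i. (cmod (x i))\<^sup>2)"

text \<open>Period index: paper's p(i) = ((i-1) mod k)+1; for 0-based row r this is (r mod k)+1.\<close>
definition per :: "nat \<Rightarrow> nat \<Rightarrow> nat" where
  "per k r = r mod k + 1"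

definition Tpert :: "nat \<Rightarrow> complex \<Rightarrow> (nat \<Rightarrow> complex) \<Rightarrow> (nat \<Rightarrow> complex) \<Rightarrow> (nat \<Rightarrow> complex)
    \<Rightarrow> (nat \<Rightarrow> complex) \<Rightarrow> (nat \<Rightarrow> complex)" where
  "Tpert k a as bs cs x = (\<lambda>r.
     (as (per k r) + (if r = 0 then a else 0)) * x r
     + bs (per k r) * x (Suc r)
     + (if r = 0 then 0 else cs (per k (r - 1)) * x (r - 1)))"

definition Tpert_tr :: "nat \<Rightarrow> complex \<Rightarrow> (nat \<Rightarrow> complex) \<Rightarrow> (nat \<Rightarrow> complex) \<Rightarrow> (nat \<Rightarrow> complex)
    \<Rightarrow> (nat \<Rightarrow> complex) \<Rightarrow> (nat \<Rightarrow> complex)" where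
  "Tpert_tr k a as bs cs y = (\<lambda>r.
     (as (per k r) + (if r = 0 then a else 0)) * y r
     + cs (per k r) * y (Suc r)
     + (if r = 0 then 0 else bs (per k (r - 1)) * y (r - 1)))"

definition lincomb :: "complex list \<Rightarrow> (nat \<Rightarrow> complex) list \<Rightarrow> (nat \<Rightarrow> complex)" where
  "lincomb cs vs = (\<lambda>i. \<Sum>j<length vs. cs ! j * (vs ! j) i)"

definition fredholm_l2 :: "((nat \<Rightarrow> complex) \<Rightarrow> (nat \<Rightarrow> complex)) \<Rightarrow> bool" where
  "fredholm_l2 L \<longleftrightarrow>
     (\<exists>vs. (\<forall>v\<in>set vs. l2 v) \<and>
        (\<forall>x. l2 x \<and> L x = (\<lambda>_. 0) \<longrightarrow> (\<exists>cs. length cs = length vs \<and> x = lincomb cs vs)))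
   \<and> (\<forall>xs y. (\<forall>n. l2 (xs n)) \<and> l2 y \<and> (\<lambda>n. l2norm (\<lambda>i. L (xs n) i - y i)) \<longlonglongrightarrow> 0
         \<longrightarrow> (\<exists>x. l2 x \<and> L x = y))
   \<and> (\<exists>ws. (\<forall>w\<in>set ws. l2 w) \<and>
        (\<forall>y. l2 y \<longrightarrow> (\<exists>x cs. l2 x \<and> length cs = length ws \<and> y = (\<lambda>i. L x i + lincomb cs ws i))))"

definition ess_spec :: "((nat \<Rightarrow> complex) \<Rightarrow> (nat \<Rightarrow> complex)) \<Rightarrow> complex set" where
  "ess_spec L = {\<mu>. \<not> fredholm_l2 (\<lambda>x i. L x i - \<mu> * x i)}"

definition symbol :: "nat \<Rightarrow> (nat \<Rightarrow> complex) \<Rightarrow> (nat \<Rightarrow> complex) \<Rightarrow> (nat \<Rightarrow> complex)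
    \<Rightarrow> complex \<Rightarrow> complex mat" where
  "symbol k as bs cs z =
     (1 / z) \<cdot>\<^sub>m mat k k (\<lambda>(i,j). if i = k - 1 \<and> j = 0 then bs k else 0)
     + mat k k (\<lambda>(i,j). (if i = j then as (i+1) else 0)
                      + (if j = i + 1 then bs (i+1) else 0)
                      + (if i = j + 1 then cs (j+1) else 0))
     + z \<cdot>\<^sub>m mat k k (\<lambda>(i,j). if i = 0 \<and> j = k - 1 then cs k else 0)"

text \<open>Sum of winding numbers of the eigenvalue curves about lambda = winding number about 0
  of z \<mapsto> det(f(z) - lambda I), z traversing the unit circle counterclockwise.\<close>
definition total_wind :: "nat \<Rightarrow> (nat \<Rightarrow> complex) \<Rightarrow> (nat \<Rightarrow> complex) \<Rightarrow> (nat \<Rightarrow> complex)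
    \<Rightarrow> complex \<Rightarrow> complex" where
  "total_wind k as bs cs \<mu> =
     winding_number
       (\<lambda>t. det (symbol k as bs cs (exp (2 * of_real pi * \<i> * of_real t)) - \<mu> \<cdot>\<^sub>m 1\<^sub>m k)) 0"

text \<open>Eigenvector decay bound (paper's 1-based index j corresponds to x (j-1)).\<close>
definition decay_bound :: "nat \<Rightarrow> real \<Rightarrow> real \<Rightarrow> (nat \<Rightarrow> complex) \<Rightarrow> bool" where
  "decay_bound k C \<rho> x \<longleftrightarrow>
     (\<forall>j\<ge>1. cmod (x (j - 1)) / (SUP i. cmod (x i))
        \<le> C * of_int \<lceil>real j / real k\<rceil> * \<rho> ^ (nat \<lceil>real j / real k\<rceil> - 1))"

end

theory Submission
  imports Defs
begin


definition Sm :: "nat \<Rightarrow> (nat \<Rightarrow> complex) \<Rightarrow> (nat \<Rightarrow> complex) \<Rightarrow> (nat \<Rightarrow> complex) \<Rightarrow> complex \<Rightarrow> complex \<Rightarrow> complex mat" where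
  "Sm k as bs cs \<mu> z = symbol k as bs cs z - \<mu> \<cdot>\<^sub>m 1\<^sub>m k"

lemma Sm_carrier: "Sm k as bs cs \<mu> z \<in> carrier_mat k k"
  unfolding Sm_def symbol_def by auto

lemma Sm_entry: "i < k \<Longrightarrow> j < k \<Longrightarrow> Sm k as bs cs \<mu> z $$ (i,j) =
   (if i = k - 1 \<and> j = 0 then bs k / z else 0) + (if i = j then as (i+1) - \<mu> else 0)
   + (if j = i + 1 then bs (i+1) else 0) + (if i = j + 1 then cs (j+1) else 0)
   + (if i = 0 \<and> j = k - 1 then z * cs k else 0)"
  unfolding Sm_def symbol_def by (auto simp: field_simps)

lemma sum_single_if: "finite A \<Longrightarrow> (\<Sum>j\<in>A. (if j = a then f j else 0)) = (if a \<in> A then f a else 0)"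
  by (simp add: sum.delta')

lemma Sm_mult_row: assumes "i < k" and "v \<in> carrier_vec k"
  shows "(Sm k as bs cs \<mu> z *\<^sub>v v) $ i =
     (if i = k - 1 then bs k / z * v $ 0 else 0) + (as (i+1) - \<mu>) * v $ i
   + (if i + 1 < k then bs (i+1) * v $ (i+1) else 0) + (if i \<ge> 1 then cs i * v $ (i - 1) else 0)
   + (if i = 0 then z * cs k * v $ (k - 1) else 0)"
proof -
  have "(Sm k as bs cs \<mu> z *\<^sub>v v) $ i = (\<Sum>j<k. Sm k as bs cs \<mu> z $$ (i,j) * v $ j)"
    using assms Sm_carrier[of k as bs cs \<mu> z]
    by (auto simp: mult_mat_vec_def scalar_prod_def row_def lessThan_atLeast0 intro!: sum.cong)
  also have "\<dots> = (\<Sum>j<k. (if j = 0 then (if i = k - 1 then bs k / z * v $ 0 else 0) else 0)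
      + (if j = i then (as (i+1) - \<mu>) * v $ i else 0)
      + (if j = i + 1 then bs (i+1) * v $ (i+1) else 0)
      + (if j = i - 1 then (if i \<ge> 1 then cs i * v $ (i - 1) else 0) else 0)
      + (if j = k - 1 then (if i = 0 then z * cs k * v $ (k - 1) else 0) else 0))"
    using assms by (intro sum.cong refl) (auto simp: Sm_entry algebra_simps)
  also have "\<dots> = (if i = k - 1 then bs k / z * v $ 0 else 0) + (as (i+1) - \<mu>) * v $ i
   + (if i + 1 < k then bs (i+1) * v $ (i+1) else 0) + (if i \<ge> 1 then cs i * v $ (i - 1) else 0)
   + (if i = 0 then z * cs k * v $ (k - 1) else 0)"
    using assms by (auto simp add: sum.distrib sum_single_if)
  finally show ?thesis .
qed

definition Rrow :: "nat \<Rightarrow> (nat \<Rightarrow> complex) \<Rightarrow> (nat \<Rightarrow> complex) \<Rightarrow> (nat \<Rightarrow> complex) \<Rightarrow> complex \<Rightarrow> (nat \<Rightarrow> complex) \<Rightarrow> nat \<Rightarrow> complex" where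
  "Rrow k as bs cs \<mu> x r = (as (per k r) - \<mu>) * x r + bs (per k r) * x (Suc r) + cs (per k (r - 1)) * x (r - 1)"

lemma bloch_pow: fixes x :: "nat \<Rightarrow> complex" assumes "\<And>i. x (i + k) = \<nu> * x i" shows "x (m * k + j) = \<nu> ^ m * x j"
proof (induction m)
  case (Suc m)
  have "x (Suc m * k + j) = x ((m * k + j) + k)" by (simp add: algebra_simps)
  also have "\<dots> = \<nu> * x (m * k + j)" by (rule assms)
  also have "\<dots> = \<nu> * (\<nu> ^ m * x j)" using Suc by simp
  finally show ?case by (simp only: power_Suc mult.assoc)
qed simp

lemma per_eq: "j < k \<Longrightarrow> per k (m * k + j) = j + 1"
  unfolding per_def by simp

lemma bloch_row:
  assumes k: "k \<ge> 1" and nu: "\<nu> \<noteq> 0" and bl: "\<And>i. x (i + k) = \<nu> * x i"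
    and j: "j < k" and mj: "1 \<le> m \<or> 1 \<le> j"
  shows "Rrow k as bs cs \<mu> x (m * k + j) = \<nu> ^ m * (Sm k as bs cs \<mu> (1 / \<nu>) *\<^sub>v vec k x) $ j"
proof -
  have P: "x (m * k + j) = \<nu> ^ m * x j" for m j using bl by (rule bloch_pow)
  have row: "(Sm k as bs cs \<mu> (1 / \<nu>) *\<^sub>v vec k x) $ j =
     (if j = k - 1 then bs k * \<nu> * x 0 else 0) + (as (j+1) - \<mu>) * x j
   + (if j + 1 < k then bs (j+1) * x (j+1) else 0) + (if j \<ge> 1 then cs j * x (j - 1) else 0)
   + (if j = 0 then cs k * x (k - 1) / \<nu> else 0)"
    using j k by (subst Sm_mult_row) auto
  have p1: "per k (m * k + j) = j + 1" using j by (rule per_eq)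
  have e1: "x (m * k + j) = \<nu> ^ m * x j" by (rule P)
  show ?thesis
  proof (cases "j \<ge> 1")
    case True
    have ii: "m * k + j - 1 = m * k + (j - 1)" using True by simp
    have p2: "per k (m * k + j - 1) = j" unfolding ii using True j by (subst per_eq) auto
    have e3: "x (m * k + j - 1) = \<nu> ^ m * x (j - 1)" unfolding ii by (rule P)
    show ?thesis
    proof (cases "j + 1 < k")
      case True2: True
      have e2: "x (Suc (m * k + j)) = \<nu> ^ m * x (j + 1)" using P[of m "j+1"] by simp
      have "Rrow k as bs cs \<mu> x (m * k + j) = (as (j+1) - \<mu>) * (\<nu> ^ m * x j) + bs (j+1) * (\<nu> ^ m * x (j + 1)) + cs j * (\<nu> ^ m * x (j - 1))"
        unfolding Rrow_def e1 e2 e3 p1 p2 by simp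
      also have "\<dots> = \<nu> ^ m * (Sm k as bs cs \<mu> (1 / \<nu>) *\<^sub>v vec k x) $ j"
        unfolding row using True True2 by (simp add: algebra_simps)
      finally show ?thesis .
    next
      case False
      hence jk: "j = k - 1" using j by simp
      have ii2: "Suc (m * k + j) = Suc m * k + 0" using jk k by simp
      have e2: "x (Suc (m * k + j)) = \<nu> ^ Suc m * x 0" unfolding ii2 by (rule P)
      have "Rrow k as bs cs \<mu> x (m * k + j) = (as (j+1) - \<mu>) * (\<nu> ^ m * x j) + bs (j+1) * (\<nu> ^ Suc m * x 0) + cs j * (\<nu> ^ m * x (j - 1))"
        unfolding Rrow_def e1 e2 e3 p1 p2 by simp
      also have "\<dots> = \<nu> ^ m * (Sm k as bs cs \<mu> (1 / \<nu>) *\<^sub>v vec k x) $ j"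
        unfolding row using True False jk k by (simp add: algebra_simps)
      finally show ?thesis .
    qed
  next
    case False
    hence j0: "j = 0" by simp
    with mj have m: "m \<ge> 1" by simp
    have ii: "m * k + j - 1 = (m - 1) * k + (k - 1)" using m k j0
      by (metis Nat.add_diff_assoc One_nat_def Suc_pred add.commute le_add_diff_inverse2 less_eq_Suc_le mult_Suc mult_le_mono1 nat_mult_1 not_one_le_zero add_0)
    have p2: "per k (m * k + j - 1) = k" unfolding ii using k by (subst per_eq) auto
    have e3: "x (m * k + j - 1) = \<nu> ^ (m - 1) * x (k - 1)" unfolding ii by (rule P)
    have nm: "\<nu> ^ m = \<nu> ^ (m - 1) * \<nu>" using m by (metis One_nat_def Suc_pred less_eq_Suc_le power_Suc2)
    show ?thesis
    proof (cases "k = 1")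
      case True
      have ii2: "Suc (m * k + j) = Suc m * k + 0" using True j0 by simp
      have e2: "x (Suc (m * k + j)) = \<nu> ^ Suc m * x 0" unfolding ii2 by (rule P)
      have "Rrow k as bs cs \<mu> x (m * k + j) = (as 1 - \<mu>) * (\<nu> ^ m * x 0) + bs 1 * (\<nu> ^ Suc m * x 0) + cs 1 * (\<nu> ^ (m - 1) * x 0)"
        unfolding Rrow_def e1 e2 e3 p1 p2 using True j0 by simp
      also have "\<dots> = \<nu> ^ m * (Sm k as bs cs \<mu> (1 / \<nu>) *\<^sub>v vec k x) $ j"
        unfolding row using True j0 nu nm by (simp add: field_simps)
      finally show ?thesis .
    next
      case False
      have e2: "x (Suc (m * k + j)) = \<nu> ^ m * x 1" using P[of m 1] j0 by simp
      have "Rrow k as bs cs \<mu> x (m * k + j) = (as 1 - \<mu>) * (\<nu> ^ m * x 0) + bs 1 * (\<nu> ^ m * x 1) + cs k * (\<nu> ^ (m - 1) * x (k - 1))"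
        unfolding Rrow_def e1 e2 e3 p1 p2 using j0 by simp
      also have "\<dots> = \<nu> ^ m * (Sm k as bs cs \<mu> (1 / \<nu>) *\<^sub>v vec k x) $ j"
        unfolding row using False j0 nu nm k by (simp add: field_simps)
      finally show ?thesis .
    qed
  qed
qed

lemma bloch_iff:
  assumes k: "k \<ge> 1" and nu: "\<nu> \<noteq> 0" and bl: "\<And>i. x (i + k) = \<nu> * x i"
  shows "(\<forall>r\<ge>1. Rrow k as bs cs \<mu> x r = 0) \<longleftrightarrow> Sm k as bs cs \<mu> (1 / \<nu>) *\<^sub>v vec k x = 0\<^sub>v k"
proof
  assume H: "\<forall>r\<ge>1. Rrow k as bs cs \<mu> x r = 0"
  show "Sm k as bs cs \<mu> (1 / \<nu>) *\<^sub>v vec k x = 0\<^sub>v k"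
  proof (rule eq_vecI)
    fix j assume "j < dim_vec (0\<^sub>v k :: complex vec)"
    hence j: "j < k" by simp
    have "Rrow k as bs cs \<mu> x (1 * k + j) = \<nu> ^ 1 * (Sm k as bs cs \<mu> (1 / \<nu>) *\<^sub>v vec k x) $ j"
      by (rule bloch_row[where x=x and k=k and \<nu>=\<nu>, OF k nu bl j]) simp
    moreover have "Rrow k as bs cs \<mu> x (1 * k + j) = 0" using H k by simp
    ultimately show "(Sm k as bs cs \<mu> (1 / \<nu>) *\<^sub>v vec k x) $ j = 0\<^sub>v k $ j" using nu j by simp
  qed (simp add: Sm_carrier[THEN carrier_matD(1)])
next
  assume H: "Sm k as bs cs \<mu> (1 / \<nu>) *\<^sub>v vec k x = 0\<^sub>v k"
  show "\<forall>r\<ge>1. Rrow k as bs cs \<mu> x r = 0"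
  proof (intro allI impI)
    fix r :: nat assume r: "r \<ge> 1"
    have j: "r mod k < k" using k by simp
    have e: "r = (r div k) * k + r mod k" by simp
    have mj: "1 \<le> r div k \<or> 1 \<le> r mod k" using r e by (metis One_nat_def add_0 less_one mult_0 not_le)
    have "Rrow k as bs cs \<mu> x ((r div k) * k + r mod k) = \<nu> ^ (r div k) * (Sm k as bs cs \<mu> (1 / \<nu>) *\<^sub>v vec k x) $ (r mod k)"
      by (rule bloch_row[where x=x and k=k and \<nu>=\<nu>, OF k nu bl j mj])
    then show "Rrow k as bs cs \<mu> x r = 0" using H j e by simp
  qed
qed



lemma symbol_transpose:
  assumes z: "z \<noteq> 0"
  shows "Sm k as cs bs \<mu> z = transpose_mat (Sm k as bs cs \<mu> (1 / z))"
proof (rule eq_matI)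
  fix i j assume i: "i < dim_row (transpose_mat (Sm k as bs cs \<mu> (1 / z)))"
     and j: "j < dim_col (transpose_mat (Sm k as bs cs \<mu> (1 / z)))"
  hence ik: "i < k" and jk: "j < k" using Sm_carrier[of k as bs cs \<mu> "1/z"] by auto
  show "Sm k as cs bs \<mu> z $$ (i, j) = transpose_mat (Sm k as bs cs \<mu> (1 / z)) $$ (i, j)"
    unfolding transpose_mat_def using ik jk z Sm_carrier[of k as bs cs \<mu> "1/z"]
    by (simp add: Sm_entry)
qed (simp_all add: Sm_carrier[THEN carrier_matD(1)] Sm_carrier[THEN carrier_matD(2)])

lemma det_Sm_transpose:
  assumes z: "z \<noteq> 0"
  shows "det (Sm k as cs bs \<mu> z) = det (Sm k as bs cs \<mu> (1 / z))"
  using symbol_transpose[OF z] det_transpose[OF Sm_carrier] by simp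


lemma laurent_mult_step:
  fixes a b c A B C z :: complex
  assumes z: "z \<noteq> 0" and "b * C = 0" and "c * A = 0"
  shows "(a + b * z + c / z) * (A / z + B + C * z) = (a * A + c * B) / z + (a * B + b * A + c * C) + (a * C + b * B) * z"
proof -
  have "(a + b * z + c / z) * (A / z + B + C * z) = (a * A + c * B) / z + (a * B + b * A + c * C) + (a * C + b * B) * z
           + (b * C) * z * z + (c * A) / (z * z)"
    using z by (simp add: field_simps)
  then show ?thesis using assms by simp
qed

lemma prod_laurent:
  fixes F :: "nat \<Rightarrow> complex \<Rightarrow> complex"
  assumes "finite I"
  shows "(\<forall>i\<in>I. \<forall>z. F i z = \<alpha> i + \<beta> i * z + \<gamma> i / z) \<longrightarrow> (\<forall>i\<in>I. i \<noteq> i0 \<longrightarrow> \<beta> i = 0) \<longrightarrow> (\<forall>i\<in>I. i \<noteq> i1 \<longrightarrow> \<gamma> i = 0) \<longrightarrow>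
     (\<exists>A B C. (\<forall>z. z \<noteq> 0 \<longrightarrow> (\<Prod>i\<in>I. F i z) = A / z + B + C * z) \<and> (i0 \<notin> I \<longrightarrow> C = 0) \<and> (i1 \<notin> I \<longrightarrow> A = 0))"
  using assms
proof (induction I rule: finite_induct)
  case empty
  show ?case by (intro impI exI[of _ 0] exI[of _ 1] exI[of _ 0]) simp
next
  case (insert i I)
  show ?case
  proof (intro impI)
    assume h1: "\<forall>i\<in>insert i I. \<forall>z. F i z = \<alpha> i + \<beta> i * z + \<gamma> i / z"
      and h2: "\<forall>ia\<in>insert i I. ia \<noteq> i0 \<longrightarrow> \<beta> ia = 0"
      and h3: "\<forall>ia\<in>insert i I. ia \<noteq> i1 \<longrightarrow> \<gamma> ia = 0"
    have "\<exists>A B C. (\<forall>z. z \<noteq> 0 \<longrightarrow> (\<Prod>i\<in>I. F i z) = A / z + B + C * z) \<and> (i0 \<notin> I \<longrightarrow> C = 0) \<and> (i1 \<notin> I \<longrightarrow> A = 0)"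
      using insert.IH h1 h2 h3 by blast
    then obtain A B C where
      H1: "\<forall>z. z \<noteq> 0 \<longrightarrow> (\<Prod>i\<in>I. F i z) = A / z + B + C * z" and H2: "i0 \<notin> I \<longrightarrow> C = 0" and H3: "i1 \<notin> I \<longrightarrow> A = 0"
      by blast
    have Fi: "F i z = \<alpha> i + \<beta> i * z + \<gamma> i / z" for z using h1 by simp
    have bC: "\<beta> i * C = 0"
    proof (cases "i = i0")
      case True then show ?thesis using H2 insert.hyps(2) by simp
    next
      case False then show ?thesis using h2 by simp
    qed
    have gA: "\<gamma> i * A = 0"
    proof (cases "i = i1")
      case True then show ?thesis using H3 insert.hyps(2) by simp
    next
      case False then show ?thesis using h3 by simp
    qed
    show "\<exists>A B C. (\<forall>z. z \<noteq> 0 \<longrightarrow> (\<Prod>i\<in>insert i I. F i z) = A / z + B + C * z) \<and> (i0 \<notin> insert i I \<longrightarrow> C = 0) \<and> (i1 \<notin> insert i I \<longrightarrow> A = 0)"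
    proof (intro exI conjI)
      show "\<forall>z. z \<noteq> 0 \<longrightarrow> (\<Prod>i\<in>insert i I. F i z) = (\<alpha> i * A + \<gamma> i * B) / z + (\<alpha> i * B + \<beta> i * A + \<gamma> i * C) + (\<alpha> i * C + \<beta> i * B) * z"
      proof (intro allI impI)
        fix z :: complex assume z: "z \<noteq> 0"
        have "(\<Prod>i\<in>insert i I. F i z) = F i z * (\<Prod>i\<in>I. F i z)"
          using insert.hyps by simp
        also have "\<dots> = (\<alpha> i + \<beta> i * z + \<gamma> i / z) * (A / z + B + C * z)"
          using H1 z Fi by simp
        also have "\<dots> = (\<alpha> i * A + \<gamma> i * B) / z + (\<alpha> i * B + \<beta> i * A + \<gamma> i * C) + (\<alpha> i * C + \<beta> i * B) * z"
          by (rule laurent_mult_step[OF z bC gA])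
        finally show "(\<Prod>i\<in>insert i I. F i z) = (\<alpha> i * A + \<gamma> i * B) / z + (\<alpha> i * B + \<beta> i * A + \<gamma> i * C) + (\<alpha> i * C + \<beta> i * B) * z" .
      qed
      show "i0 \<notin> insert i I \<longrightarrow> \<alpha> i * C + \<beta> i * B = 0" using H2 h2 by auto
      show "i1 \<notin> insert i I \<longrightarrow> \<alpha> i * A + \<gamma> i * B = 0" using H3 h3 by auto
    qed
  qed
qed

lemma sum_laurent:
  fixes F :: "'a \<Rightarrow> complex \<Rightarrow> complex"
  assumes "finite S"
  shows "(\<forall>p\<in>S. \<exists>A B C. \<forall>z. z \<noteq> 0 \<longrightarrow> F p z = A / z + B + C * z) \<longrightarrow> (\<exists>A B C. \<forall>z. z \<noteq> 0 \<longrightarrow> (\<Sum>p\<in>S. F p z) = A / z + B + C * z)"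
  using assms
proof (induction S rule: finite_induct)
  case empty
  show ?case by (intro impI exI[of _ 0]) simp
next
  case (insert p S)
  show ?case
  proof
    assume h: "\<forall>p\<in>insert p S. \<exists>A B C. \<forall>z. z \<noteq> 0 \<longrightarrow> F p z = A / z + B + C * z"
    obtain A B C where 1: "\<forall>z. z \<noteq> 0 \<longrightarrow> (\<Sum>p\<in>S. F p z) = A / z + B + C * z" using insert.IH h by blast
    obtain A' B' C' where 2: "\<forall>z. z \<noteq> 0 \<longrightarrow> F p z = A' / z + B' + C' * z" using h by blast
    show "\<exists>A B C. \<forall>z. z \<noteq> 0 \<longrightarrow> (\<Sum>p\<in>insert p S. F p z) = A / z + B + C * z"
    proof (intro exI allI impI)
      fix z :: complex assume z: "z \<noteq> 0"
      have "(\<Sum>p\<in>insert p S. F p z) = F p z + (\<Sum>p\<in>S. F p z)" using insert.hyps by simp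
      also have "\<dots> = (A' / z + B' + C' * z) + (A / z + B + C * z)" using 1 2 z by simp
      also have "\<dots> = (A + A') / z + (B + B') + (C + C') * z" by (simp add: add_divide_distrib algebra_simps)
      finally show "(\<Sum>p\<in>insert p S. F p z) = (A + A') / z + (B + B') + (C + C') * z" .
    qed
  qed
qed

lemma det_laurent:
  assumes k: "k \<ge> 1"
  shows "\<exists>A B C. \<forall>z. z \<noteq> 0 \<longrightarrow> det (Sm k as bs cs \<mu> z) = A / z + B + C * z"
proof -
  define \<beta>f where "\<beta>f = (\<lambda>(i::nat) (j::nat). if i = 0 \<and> j = k - 1 then cs k else (0::complex))"
  define \<gamma>f where "\<gamma>f = (\<lambda>(i::nat) (j::nat). if i = k - 1 \<and> j = 0 then bs k else (0::complex))"
  define \<alpha>f where "\<alpha>f = (\<lambda>(i::nat) (j::nat). (if i = j then as (i+1) - \<mu> else 0)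
   + (if j = i + 1 then bs (i+1) else 0) + (if i = j + 1 then cs (j+1) else (0::complex)))"
  have E: "Sm k as bs cs \<mu> z $$ (i,j) = \<alpha>f i j + \<beta>f i j * z + \<gamma>f i j / z" if "i < k" "j < k" for i j z
    using that unfolding \<alpha>f_def \<beta>f_def \<gamma>f_def by (simp add: Sm_entry)
  have D: "det (Sm k as bs cs \<mu> z) = (\<Sum>p \<in> {p. p permutes {0..<k}}. signof p * (\<Prod>i = 0..<k. Sm k as bs cs \<mu> z $$ (i, p i)))" for z
    by (rule det_def'[OF Sm_carrier])
  have "\<forall>p\<in>{p. p permutes {0..<k}}. \<exists>A B C. \<forall>z. z \<noteq> 0 \<longrightarrow> signof p * (\<Prod>i = 0..<k. Sm k as bs cs \<mu> z $$ (i, p i)) = A / z + B + C * z"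
  proof
    fix p assume p: "p \<in> {p. p permutes {0..<k}}"
    have pk: "i < k \<Longrightarrow> p i < k" for i using p by (simp add: permutes_in_image)
    have h1: "\<forall>i\<in>{0..<k}. \<forall>z. Sm k as bs cs \<mu> z $$ (i, p i) = \<alpha>f i (p i) + \<beta>f i (p i) * z + \<gamma>f i (p i) / z"
      using E pk by simp
    have h2: "\<forall>i\<in>{0..<k}. i \<noteq> 0 \<longrightarrow> \<beta>f i (p i) = 0" unfolding \<beta>f_def by simp
    have h3: "\<forall>i\<in>{0..<k}. i \<noteq> k - 1 \<longrightarrow> \<gamma>f i (p i) = 0" unfolding \<gamma>f_def by simp
    obtain A B C where H: "\<forall>z. z \<noteq> 0 \<longrightarrow> (\<Prod>i\<in>{0..<k}. Sm k as bs cs \<mu> z $$ (i, p i)) = A / z + B + C * z"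
      using prod_laurent[of "{0..<k}" "\<lambda>i z. Sm k as bs cs \<mu> z $$ (i, p i)" "\<lambda>i. \<alpha>f i (p i)" "\<lambda>i. \<beta>f i (p i)" "\<lambda>i. \<gamma>f i (p i)" 0 "k - 1"]
        h1 h2 h3 by blast
    show "\<exists>A B C. \<forall>z. z \<noteq> 0 \<longrightarrow> signof p * (\<Prod>i = 0..<k. Sm k as bs cs \<mu> z $$ (i, p i)) = A / z + B + C * z"
    proof (intro exI allI impI)
      fix z :: complex assume "z \<noteq> 0"
      then show "signof p * (\<Prod>i = 0..<k. Sm k as bs cs \<mu> z $$ (i, p i)) = (signof p * A) / z + signof p * B + (signof p * C) * z"
        using H by (simp add: algebra_simps)
    qed
  qed
  then have "\<exists>A B C. \<forall>z. z \<noteq> 0 \<longrightarrow> (\<Sum>p \<in> {p. p permutes {0..<k}}. signof p * (\<Prod>i = 0..<k. Sm k as bs cs \<mu> z $$ (i, p i))) = A / z + B + C * z"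
    using sum_laurent[of "{p. p permutes {0..<k}}" "\<lambda>p z. signof p * (\<Prod>i = 0..<k. Sm k as bs cs \<mu> z $$ (i, p i))"]
    by (simp add: finite_permutations)
  then show ?thesis unfolding D .
qed




lemma circ_int:
  assumes "cmod a \<noteq> 1"
  shows "((\<lambda>w. 1 / (w - a)) has_contour_integral (2 * pi * \<i> * (if cmod a < 1 then 1 else 0))) (circlepath 0 1)"
proof -
  have na: "a \<notin> path_image (circlepath 0 1)" using assms by (simp add: sphere_def dist_norm)
  have "winding_number (circlepath 0 1) a = (if cmod a < 1 then 1 else 0)"
  proof (cases "cmod a < 1")
    case True then show ?thesis by (simp add: winding_number_circlepath)
  next
    case False
    have "winding_number (circlepath 0 1) a = 0"
      by (rule winding_number_zero_outside[where s = "cball 0 1"]) (use False assms in \<open>auto simp: valid_path_imp_path dist_norm\<close>)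
    then show ?thesis using False by simp
  qed
  then show ?thesis using has_contour_integral_winding_number[OF valid_path_circlepath na] by simp
qed

lemma aux_frac:
  fixes x a b C w1 w2 :: complex
  assumes "x \<noteq> 0" "C \<noteq> 0" "a \<noteq> 0" "b \<noteq> 0" "w1 = x - a" "w2 = x - b"
  shows "(- (C * w1 * w2) / x\<^sup>2 + C) / (C * a * b / x) = 1 / a + 1 / b - 1 / x"
  unfolding assms(5,6) using assms(1-4) by (simp add: field_simps power2_eq_square; algebra)

lemma aux_frac2:
  fixes x a B w1 :: complex
  assumes "x \<noteq> 0" "B \<noteq> 0" "a \<noteq> 0" "w1 = x - a"
  shows "(B * w1 / x\<^sup>2) / (B * a / x) = 1 / a - 1 / x"
  unfolding assms(4) using assms(1-3) by (simp add: field_simps power2_eq_square; algebra)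

lemma wind_laurent:
  fixes A B C :: complex
  defines "Dl \<equiv> (\<lambda>z. A / z + B + C * z)"
  assumes nz: "\<And>z. cmod z = 1 \<Longrightarrow> Dl z \<noteq> 0"
  shows "(Re (winding_number (Dl \<circ> circlepath 0 1) 0) < 0 \<longrightarrow> (\<forall>w. w \<noteq> 0 \<and> Dl w = 0 \<longrightarrow> 1 < cmod w))
       \<and> (Re (winding_number (Dl \<circ> circlepath 0 1) 0) > 0 \<longrightarrow> (\<forall>w. w \<noteq> 0 \<and> Dl w = 0 \<longrightarrow> cmod w < 1))"
proof -
  let ?c = "circlepath 0 1"
  define S :: "complex set" where "S = - {0}"
  have oS: "open S" unfolding S_def by auto
  have deriv: "(Dl has_field_derivative (- A / z\<^sup>2 + C)) (at z)" if "z \<noteq> 0" for z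
    unfolding Dl_def using that by (auto intro!: derivative_eq_intros simp: power2_eq_square field_simps)
  have holo: "Dl holomorphic_on S"
    unfolding S_def holomorphic_on_def field_differentiable_def using deriv has_field_derivative_at_within by blast
  have ana: "Dl analytic_on S" using holo oS by (simp add: analytic_on_open)
  have pic: "path_image ?c \<subseteq> S" unfolding S_def by auto
  have vp: "valid_path (Dl \<circ> ?c)" by (rule valid_path_compose_holomorphic[OF valid_path_circlepath holo oS pic])
  have n0: "0 \<notin> path_image (Dl \<circ> ?c)" using nz by (auto simp: path_image_compose)
  have W: "winding_number (Dl \<circ> ?c) 0 = 1/(2*pi*\<i>) * contour_integral ?c (\<lambda>w. (- A / w\<^sup>2 + C) / Dl w)"
  proof -
    have "winding_number (Dl \<circ> ?c) 0 = 1/(2*pi*\<i>) * contour_integral (Dl \<circ> ?c) (\<lambda>w. 1/(w - 0))"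
      by (rule winding_number_valid_path[OF vp n0])
    also have "contour_integral (Dl \<circ> ?c) (\<lambda>w. 1/(w - 0)) = contour_integral ?c (\<lambda>w. deriv Dl w * (1 / (Dl w - 0)))"
      by (rule contour_integral_comp_analyticW[OF ana valid_path_circlepath pic])
    also have "\<dots> = contour_integral ?c (\<lambda>w. (- A / w\<^sup>2 + C) / Dl w)"
    proof (rule contour_integral_eq)
      fix x assume "x \<in> path_image ?c"
      hence "x \<noteq> 0" by auto
      then show "deriv Dl x * (1 / (Dl x - 0)) = (- A / x\<^sup>2 + C) / Dl x"
        using DERIV_imp_deriv[OF deriv] by simp
    qed
    finally show ?thesis .
  qed
  have ind: "\<And>P. P \<longrightarrow> P" by simp
  show ?thesis
  proof (cases "C = 0")
    case False
    define s where "s = csqrt (B\<^sup>2 - 4 * A * C)"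
    define w1 where "w1 = (- B + s) / (2 * C)"
    define w2 where "w2 = (- B - s) / (2 * C)"
    have s2: "s\<^sup>2 = B\<^sup>2 - 4 * A * C" unfolding s_def by simp
    have fac: "C * (z - w1) * (z - w2) = C * z\<^sup>2 + B * z + A" for z
    proof -
      have "C * (z - w1) * (z - w2) = C * z\<^sup>2 + B * z + (B\<^sup>2 - s\<^sup>2) / (4 * C)"
        unfolding w1_def w2_def using False by (simp add: field_simps power2_eq_square)
      then show ?thesis using s2 False by (simp add: field_simps)
    qed
    have Dfac: "Dl z = C * (z - w1) * (z - w2) / z" if "z \<noteq> 0" for z
      unfolding fac Dl_def using that by (simp add: field_simps power2_eq_square)
    have w1c: "cmod w1 \<noteq> 1"
    proof
      assume h: "cmod w1 = 1" hence "w1 \<noteq> 0" by auto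
      then show False using nz[OF h] Dfac[of w1] by simp
    qed
    have w2c: "cmod w2 \<noteq> 1"
    proof
      assume h: "cmod w2 = 1" hence "w2 \<noteq> 0" by auto
      then show False using nz[OF h] Dfac[of w2] by simp
    qed
    have int: "((\<lambda>w. 1 / (w - w1) + 1 / (w - w2) - 1 / (w - 0)) has_contour_integral
        (2 * pi * \<i> * (if cmod w1 < 1 then 1 else 0) + 2 * pi * \<i> * (if cmod w2 < 1 then 1 else 0) - 2 * pi * \<i> * (if cmod (0::complex) < 1 then 1 else 0))) ?c"
      by (intro has_contour_integral_diff has_contour_integral_add circ_int w1c w2c) simp
    have "contour_integral ?c (\<lambda>w. (- A / w\<^sup>2 + C) / Dl w) = contour_integral ?c (\<lambda>w. 1 / (w - w1) + 1 / (w - w2) - 1 / (w - 0))"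
    proof (rule contour_integral_eq)
      fix x assume x: "x \<in> path_image ?c"
      hence x0: "x \<noteq> 0" and x1: "cmod x = 1" by auto
      have a1: "x - w1 \<noteq> 0" using x1 w1c by auto
      have a2: "x - w2 \<noteq> 0" using x1 w2c by auto
      have CA: "A = C * w1 * w2" using fac[of 0] by simp
      have "(- (C * w1 * w2) / x\<^sup>2 + C) / (C * (x - w1) * (x - w2) / x) = 1 / (x - w1) + 1 / (x - w2) - 1 / (x - 0)"
        using aux_frac[OF x0 False a1 a2] by simp
      then show "(- A / x\<^sup>2 + C) / Dl x = 1 / (x - w1) + 1 / (x - w2) - 1 / (x - 0)"
        unfolding CA Dfac[OF x0] .
    qed
    also have "\<dots> = 2 * pi * \<i> * ((if cmod w1 < 1 then 1 else 0) + (if cmod w2 < 1 then 1 else 0) - 1)"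
      using contour_integral_unique[OF int] by (simp add: algebra_simps)
    finally have wn: "winding_number (Dl \<circ> ?c) 0 = (if cmod w1 < 1 then 1 else 0) + (if cmod w2 < 1 then 1 else 0) - 1"
      unfolding W by simp
    have zer: "w = w1 \<or> w = w2" if "w \<noteq> 0" "Dl w = 0" for w
      using that Dfac[of w] False by simp
    show ?thesis
    proof (intro conjI impI allI)
      fix w assume "Re (winding_number (Dl \<circ> ?c) 0) < 0" "w \<noteq> 0 \<and> Dl w = 0"
      then show "1 < cmod w" using zer[of w] w1c w2c unfolding wn by (auto split: if_splits)
    next
      fix w assume "Re (winding_number (Dl \<circ> ?c) 0) > 0" "w \<noteq> 0 \<and> Dl w = 0"
      then show "cmod w < 1" using zer[of w] w1c w2c unfolding wn by (auto split: if_splits)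
    qed
  next
    case C0: True
    show ?thesis
    proof (cases "B = 0")
      case False
      define w1 where "w1 = - A / B"
      have Dfac: "Dl z = B * (z - w1) / z" if "z \<noteq> 0" for z
        unfolding Dl_def w1_def using that C0 False by (simp add: field_simps)
      have w1c: "cmod w1 \<noteq> 1"
      proof
        assume h: "cmod w1 = 1" hence "w1 \<noteq> 0" by auto
        then show False using nz[OF h] Dfac[of w1] by simp
      qed
      have int: "((\<lambda>w. 1 / (w - w1) - 1 / (w - 0)) has_contour_integral
          (2 * pi * \<i> * (if cmod w1 < 1 then 1 else 0) - 2 * pi * \<i> * (if cmod (0::complex) < 1 then 1 else 0))) ?c"
        by (intro has_contour_integral_diff circ_int w1c) simp
      have "contour_integral ?c (\<lambda>w. (- A / w\<^sup>2 + C) / Dl w) = contour_integral ?c (\<lambda>w. 1 / (w - w1) - 1 / (w - 0))"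
      proof (rule contour_integral_eq)
        fix x assume x: "x \<in> path_image ?c"
        hence x0: "x \<noteq> 0" and x1: "cmod x = 1" by auto
        have a1: "x - w1 \<noteq> 0" using x1 w1c by auto
        have mA: "- A = B * w1" unfolding w1_def using False by simp
        have "(B * w1 / x\<^sup>2) / (B * (x - w1) / x) = 1 / (x - w1) - 1 / (x - 0)"
          using aux_frac2[OF x0 False a1] by simp
        then show "(- A / x\<^sup>2 + C) / Dl x = 1 / (x - w1) - 1 / (x - 0)"
          unfolding Dfac[OF x0] C0 using mA by simp
      qed
      also have "\<dots> = 2 * pi * \<i> * ((if cmod w1 < 1 then 1 else 0) - 1)"
        using contour_integral_unique[OF int] by (simp add: algebra_simps)
      finally have wn: "winding_number (Dl \<circ> ?c) 0 = (if cmod w1 < 1 then 1 else 0) - 1"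
        unfolding W by simp
      have zer: "w = w1" if "w \<noteq> 0" "Dl w = 0" for w
        using that Dfac[of w] False by simp
      show ?thesis
      proof (intro conjI impI allI)
        fix w assume "Re (winding_number (Dl \<circ> ?c) 0) < 0" "w \<noteq> 0 \<and> Dl w = 0"
        then show "1 < cmod w" using zer[of w] w1c unfolding wn by (auto split: if_splits)
      next
        fix w assume "Re (winding_number (Dl \<circ> ?c) 0) > 0" "w \<noteq> 0 \<and> Dl w = 0"
        then show "cmod w < 1" unfolding wn by (auto split: if_splits)
      qed
    next
      case True
      have int: "((\<lambda>w. - (1 / (w - 0))) has_contour_integral - (2 * pi * \<i> * (if cmod (0::complex) < 1 then 1 else 0))) ?c"
        by (intro has_contour_integral_neg circ_int) simp
      have "contour_integral ?c (\<lambda>w. (- A / w\<^sup>2 + C) / Dl w) = contour_integral ?c (\<lambda>w. - (1 / (w - 0)))"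
      proof (rule contour_integral_eq)
        fix x assume x: "x \<in> path_image ?c"
        hence x0: "x \<noteq> 0" and x1: "cmod x = 1" by auto
        have "A \<noteq> 0" using nz[OF x1] True C0 unfolding Dl_def by auto
        then show "(- A / x\<^sup>2 + C) / Dl x = - (1 / (x - 0))"
          using x0 True C0 unfolding Dl_def by (simp add: field_simps power2_eq_square)
      qed
      also have "\<dots> = - 2 * pi * \<i>"
        using contour_integral_unique[OF int] by simp
      finally have wn: "winding_number (Dl \<circ> ?c) 0 = - 1"
        unfolding W by simp
      show ?thesis
      proof (intro conjI impI allI)
        fix w assume "Re (winding_number (Dl \<circ> ?c) 0) < 0" "w \<noteq> 0 \<and> Dl w = 0"
        moreover have "A \<noteq> 0" using nz[of 1] True C0 unfolding Dl_def by auto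
        ultimately show "1 < cmod w" using True C0 unfolding Dl_def by simp
      next
        fix w assume "Re (winding_number (Dl \<circ> ?c) 0) > 0" "w \<noteq> 0 \<and> Dl w = 0"
        then show "cmod w < 1" unfolding wn by simp
      qed
    qed
  qed
qed



definition lc :: "complex \<Rightarrow> complex \<Rightarrow> complex \<times> complex \<Rightarrow> complex \<times> complex \<Rightarrow> complex \<times> complex" where
  "lc p q u v = (p * fst u + q * fst v, p * snd u + q * snd v)"

definition nn :: "complex \<times> complex \<Rightarrow> real" where
  "nn s = cmod (fst s) + cmod (snd s)"

lemma nn_nonneg: "nn s \<ge> 0" unfolding nn_def by simp

lemma nn_lc: "nn (lc p q u v) \<le> cmod p * nn u + cmod q * nn v"
proof -
  have "cmod (p * fst u + q * fst v) \<le> cmod p * cmod (fst u) + cmod q * cmod (fst v)"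
    by (metis norm_mult norm_triangle_ineq)
  moreover have "cmod (p * snd u + q * snd v) \<le> cmod p * cmod (snd u) + cmod q * cmod (snd v)"
    by (metis norm_mult norm_triangle_ineq)
  ultimately show ?thesis unfolding nn_def lc_def by (simp add: algebra_simps)
qed

primrec sg :: "complex \<Rightarrow> complex \<Rightarrow> nat \<Rightarrow> complex" where
  "sg a b 0 = 0" | "sg a b (Suc m) = a ^ m + b * sg a b m"

lemma sg_rec: "sg a b (Suc (Suc m)) = (a + b) * sg a b (Suc m) - a * b * sg a b m"
  by (simp add: algebra_simps)

lemma sg_bound:
  assumes "0 \<le> \<rho>" "cmod a \<le> \<rho>" "cmod b \<le> \<rho>"
  shows "\<rho> * cmod (sg a b m) \<le> real m * \<rho> ^ m"
proof (induction m)
  case (Suc m)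
  have "\<rho> * cmod (sg a b (Suc m)) \<le> \<rho> * (cmod a ^ m + cmod b * cmod (sg a b m))"
    using assms(1) by (intro mult_left_mono) (auto simp: norm_mult norm_power intro: order.trans[OF norm_triangle_ineq])
  also have "\<dots> = \<rho> * cmod a ^ m + cmod b * (\<rho> * cmod (sg a b m))" by (simp add: algebra_simps)
  also have "\<dots> \<le> \<rho> * \<rho> ^ m + \<rho> * (real m * \<rho> ^ m)"
  proof (rule add_mono)
    show "\<rho> * cmod a ^ m \<le> \<rho> * \<rho> ^ m" using assms by (intro mult_left_mono power_mono) auto
    show "cmod b * (\<rho> * cmod (sg a b m)) \<le> \<rho> * (real m * \<rho> ^ m)"
      by (rule mult_mono) (use assms Suc in auto)
  qed
  also have "\<dots> = real (Suc m) * \<rho> ^ Suc m" by (simp add: algebra_simps)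
  finally show ?case .
qed simp

lemma eigvec2:
  fixes \<alpha> \<beta> \<gamma> \<delta> r :: complex
  assumes "(\<alpha> - r) * (\<delta> - r) = \<beta> * \<gamma>"
  shows "\<exists>e. e \<noteq> (0, 0) \<and> \<alpha> * fst e + \<beta> * snd e = r * fst e \<and> \<gamma> * fst e + \<delta> * snd e = r * snd e"
proof (cases "\<beta> = 0")
  case False
  show ?thesis
    by (rule exI[of _ "(\<beta>, r - \<alpha>)"]) (use False assms in \<open>auto simp: algebra_simps\<close>)
next
  case b0: True
  show ?thesis
  proof (cases "\<gamma> = 0")
    case False
    show ?thesis
      by (rule exI[of _ "(r - \<delta>, \<gamma>)"]) (use False b0 assms in \<open>auto simp: algebra_simps\<close>)
  next
    case True
    show ?thesis
    proof (cases "\<alpha> = r")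
      case True2: True
      show ?thesis by (rule exI[of _ "(1, 0)"]) (use True2 True b0 in auto)
    next
      case False
      hence "\<delta> = r" using assms b0 by simp
      then show ?thesis by (intro exI[of _ "(0, 1)"]) (use True b0 in auto)
    qed
  qed
qed

lemma geo_lin_bound:
  assumes "0 \<le> q" "q < 1"
  shows "real (Suc m) * q ^ m \<le> 1 / (1 - q)"
proof -
  have "real (Suc m) * q ^ m = (\<Sum>j<Suc m. q ^ m)" by simp
  also have "\<dots> \<le> (\<Sum>j<Suc m. q ^ j)"
    using assms by (intro sum_mono power_decreasing) auto
  also have "\<dots> = (1 - q ^ Suc m) / (1 - q)"
    using assms by (subst sum_gp_strict) auto
  also have "\<dots> \<le> 1 / (1 - q)"
    using assms by (intro divide_right_mono) auto
  finally show ?thesis .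
qed

lemma summable_div_nat:
  fixes f :: "nat \<Rightarrow> real"
  assumes nn: "\<And>m. 0 \<le> f m" and sf: "summable f" and k: "k > 0"
  shows "summable (\<lambda>i. f (i div k))"
proof (rule summableI_nonneg_bounded)
  show "0 \<le> f (i div k)" for i using nn .
  fix n
  have "(\<Sum>i<n. f (i div k)) \<le> (\<Sum>i<n * k. f (i div k))"
    using k nn by (intro sum_mono2) auto
  also have "\<dots> = (\<Sum>m<n. \<Sum>i\<in>{m * k..<m * k + k}. f (i div k))"
    by (rule sum.nat_group[symmetric])
  also have "\<dots> = (\<Sum>m<n. real k * f m)"
  proof (intro sum.cong refl)
    fix m
    have "(\<Sum>i\<in>{m * k..<m * k + k}. f (i div k)) = (\<Sum>i\<in>{m * k..<m * k + k}. f m)"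
    proof (intro sum.cong refl)
      fix i assume "i \<in> {m * k..<m * k + k}"
      then have "i div k = m" by (intro div_nat_eqI) (auto simp: algebra_simps)
      then show "f (i div k) = f m" by simp
    qed
    then show "(\<Sum>i\<in>{m * k..<m * k + k}. f (i div k)) = real k * f m" by simp
  qed
  also have "\<dots> = real k * (\<Sum>m<n. f m)" by (simp add: sum_distrib_left)
  also have "\<dots> \<le> real k * suminf f"
    using sf nn by (intro mult_left_mono sum_le_suminf) auto
  finally show "(\<Sum>i<n. f (i div k)) \<le> real k * suminf f" .
qed

lemma ceil_div:
  assumes "k \<ge> 1" "j \<ge> 1"
  shows "\<lceil>real j / real k\<rceil> = int ((j - 1) div k) + 1"
proof (rule ceiling_unique)
  define m where "m = (j - 1) div k"
  define t where "t = (j - 1) mod k"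
  have jt: "j = m * k + t + 1" unfolding m_def t_def using assms by simp
  have tk: "t < k" unfolding t_def using assms by simp
  have kp: "real k > 0" using assms by simp
  have "real j \<le> (real m + 1) * real k" using jt tk by (simp add: algebra_simps)
  then show "real j / real k \<le> real_of_int (int ((j - 1) div k) + 1)"
    using kp unfolding m_def[symmetric] by (simp add: divide_le_eq)
  have "real m * real k < real j" using jt by simp
  then show "real_of_int (int ((j - 1) div k) + 1) - 1 < real j / real k"
    using kp unfolding m_def[symmetric] by (simp add: less_divide_eq)
qed

locale tri =
  fixes k :: nat and as bs cs :: "nat \<Rightarrow> complex" and \<mu> :: complex
  assumes k1: "k \<ge> 1"
    and bnz: "\<And>j. 1 \<le> j \<Longrightarrow> j \<le> k \<Longrightarrow> bs j \<noteq> 0"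
    and cnz: "\<And>j. 1 \<le> j \<Longrightarrow> j \<le> k \<Longrightarrow> cs j \<noteq> 0"
begin

lemma per_ge: "1 \<le> per k r" unfolding per_def by simp
lemma per_le: "per k r \<le> k" unfolding per_def using k1
  by (metis Suc_eq_plus1 Suc_leI less_one mod_less_divisor not_le order.strict_trans1 zero_less_one)

lemma bsp: "bs (per k r) \<noteq> 0" using bnz per_ge per_le by blast
lemma csp: "cs (per k r) \<noteq> 0" using cnz per_ge per_le by blast

definition stp :: "nat \<Rightarrow> complex \<times> complex \<Rightarrow> complex \<times> complex" where
  "stp r s = (snd s, - (cs (per k r) * fst s + (as (per k (Suc r)) - \<mu>) * snd s) / bs (per k (Suc r)))"

primrec St :: "nat \<Rightarrow> complex \<times> complex \<Rightarrow> complex \<times> complex" where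
  "St 0 s = s" | "St (Suc r) s = stp r (St r s)"

definition xs_of :: "complex \<times> complex \<Rightarrow> nat \<Rightarrow> complex" where
  "xs_of s i = fst (St i s)"

lemma St_xs: "St i s = (xs_of s i, xs_of s (Suc i))"
  unfolding xs_of_def by (simp add: stp_def)

lemma hom_xs: assumes "r \<ge> 1" shows "Rrow k as bs cs \<mu> (xs_of s) r = 0"
proof -
  obtain r' where r: "r = Suc r'" using assms by (cases r) auto
  have "xs_of s (Suc (Suc r')) = snd (St (Suc r') s)" unfolding xs_of_def by (simp add: stp_def)
  also have "\<dots> = - (cs (per k r') * xs_of s r' + (as (per k (Suc r')) - \<mu>) * xs_of s (Suc r')) / bs (per k (Suc r'))"
    using St_xs[of r' s] by (simp add: stp_def)
  finally have e: "xs_of s (Suc (Suc r')) = - (cs (per k r') * xs_of s r' + (as (per k (Suc r')) - \<mu>) * xs_of s (Suc r')) / bs (per k (Suc r'))" .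
  show ?thesis unfolding Rrow_def r e using bsp[of "Suc r'"] by (simp add: field_simps)
qed

lemma hom_unique:
  assumes H: "\<And>r. r \<ge> 1 \<Longrightarrow> Rrow k as bs cs \<mu> x r = 0"
  shows "x i = xs_of (x 0, x 1) i"
proof -
  have "St i (x 0, x 1) = (x i, x (Suc i))" for i
  proof (induction i)
    case (Suc i)
    have R: "Rrow k as bs cs \<mu> x (Suc i) = 0" using H by simp
    have "x (Suc (Suc i)) = - (cs (per k i) * x i + (as (per k (Suc i)) - \<mu>) * x (Suc i)) / bs (per k (Suc i))"
      using R bsp[of "Suc i"] unfolding Rrow_def by (simp add: field_simps)
    then show ?case using Suc by (simp add: stp_def)
  qed simp
  then show ?thesis unfolding xs_of_def by simp
qed

lemma stp_lc: "stp r (lc p q u v) = lc p q (stp r u) (stp r v)"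
  unfolding stp_def lc_def using bsp[of "Suc r"] by (simp add: field_simps)

lemma St_lc: "St r (lc p q u v) = lc p q (St r u) (St r v)"
  by (induction r) (simp_all add: stp_lc)

lemma St_lin: "St r s = lc (fst s) (snd s) (St r (1, 0)) (St r (0, 1))"
proof -
  have "s = lc (fst s) (snd s) (1, 0) (0, 1)" unfolding lc_def by simp
  then have "St r s = St r (lc (fst s) (snd s) (1, 0) (0, 1))" by simp
  then show ?thesis by (simp add: St_lc)
qed

lemma stp_per: "stp (r + k) = stp r"
proof -
  have "per k (r + k) = per k r" unfolding per_def by simp
  moreover have "per k (Suc (r + k)) = per k (Suc r)" unfolding per_def
    by (metis add_Suc mod_add_self2)
  ultimately
  show ?thesis unfolding stp_def by (simp add: fun_eq_iff)
qed

lemma St_shift: "St (r + k) s = St r (St k s)"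
  by (induction r) (simp_all add: stp_per)

definition F :: "complex \<times> complex \<Rightarrow> complex \<times> complex" where "F = St k"

lemma St_mk: "St (r + m * k) s = St r ((F ^^ m) s)"
proof (induction m arbitrary: s)
  case (Suc m)
  have "St (r + Suc m * k) s = St ((r + m * k) + k) s" by (simp add: algebra_simps)
  also have "\<dots> = St (r + m * k) (F s)" unfolding F_def by (rule St_shift)
  also have "\<dots> = St r ((F ^^ m) (F s))" by (rule Suc)
  also have "\<dots> = St r ((F ^^ Suc m) s)" by (simp only: funpow_Suc_right comp_def)
  finally show ?case .
qed simp

definition KS :: "nat \<Rightarrow> real" where "KS r = nn (St r (1, 0)) + nn (St r (0, 1))"

lemma nn_St: "nn (St r s) \<le> KS r * nn s"
proof -
  have "nn (St r s) \<le> cmod (fst s) * nn (St r (1, 0)) + cmod (snd s) * nn (St r (0, 1))"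
    using nn_lc St_lin[of r s] by metis
  also have "\<dots> \<le> KS r * nn s"
    unfolding KS_def nn_def[of s] using nn_nonneg[of "St r (1,0)"] nn_nonneg[of "St r (0,1)"]
    by (simp add: algebra_simps add_mono mult_left_mono)
  finally show ?thesis .
qed

lemma KS_nonneg: "KS r \<ge> 0" unfolding KS_def using nn_nonneg by (simp add: add_nonneg_nonneg)

definition "a11 = fst (F (1, 0))"
definition "a21 = snd (F (1, 0))"
definition "a12 = fst (F (0, 1))"
definition "a22 = snd (F (0, 1))"
definition "trF = a11 + a22"
definition "dtF = a11 * a22 - a12 * a21"

lemma F_expl: "F s = (a11 * fst s + a12 * snd s, a21 * fst s + a22 * snd s)"
  unfolding F_def a11_def a12_def a21_def a22_def using St_lin[of k s] by (simp add: lc_def F_def)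

lemma F_lc: "F (lc p q u v) = lc p q (F u) (F v)"
  unfolding F_def by (rule St_lc)

lemma cayley: "F (F s) = lc trF (- dtF) (F s) s"
  unfolding F_expl[of "F s"] unfolding F_expl[of s] lc_def trF_def dtF_def by (simp add: algebra_simps)

lemma Fpow:
  assumes "r1 + r2 = trF" "r1 * r2 = dtF"
  shows "(F ^^ Suc m) s = lc (sg r1 r2 (Suc m)) (- dtF * sg r1 r2 m) (F s) s"
proof (induction m arbitrary: s)
  case 0
  then show ?case by (simp add: lc_def)
next
  case (Suc m)
  have "(F ^^ Suc (Suc m)) s = F ((F ^^ Suc m) s)" by simp
  also have "\<dots> = lc (sg r1 r2 (Suc m)) (- dtF * sg r1 r2 m) (F (F s)) (F s)"
    unfolding Suc F_lc ..
  also have "\<dots> = lc (sg r1 r2 (Suc (Suc m))) (- dtF * sg r1 r2 (Suc m)) (F s) s"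
    unfolding cayley sg_rec assms[symmetric] by (simp add: lc_def algebra_simps)
  finally show ?case .
qed

lemma root_small:
  assumes Z: "\<And>w. w \<noteq> 0 \<Longrightarrow> det (Sm k as bs cs \<mu> w) = 0 \<Longrightarrow> 1 < cmod w"
    and r: "r * r = trF * r - dtF"
  shows "cmod r < 1"
proof (rule ccontr)
  assume "\<not> cmod r < 1"
  hence r1: "cmod r \<ge> 1" by simp
  hence r0: "r \<noteq> 0" by auto
  have "(a11 - r) * (a22 - r) = a12 * a21" using r unfolding trF_def dtF_def by (simp add: algebra_simps)
  then obtain e where e: "e \<noteq> (0,0)" "a11 * fst e + a12 * snd e = r * fst e" "a21 * fst e + a22 * snd e = r * snd e"
    using eigvec2 by blast
  have Fe: "F e = lc r 0 e e" using F_expl[of e] e by (simp add: lc_def)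
  define x where "x = xs_of e"
  have bl: "x (i + k) = r * x i" for i
  proof -
    have "St (i + k) e = St i (F e)" unfolding F_def by (rule St_shift)
    also have "\<dots> = lc r 0 (St i e) (St i e)" unfolding Fe St_lc ..
    finally show ?thesis unfolding x_def xs_of_def by (simp add: lc_def)
  qed
  have hom: "\<forall>r\<ge>1. Rrow k as bs cs \<mu> x r = 0" using hom_xs unfolding x_def by blast
  have M0: "Sm k as bs cs \<mu> (1 / r) *\<^sub>v vec k x = 0\<^sub>v k"
    using bloch_iff[where x = x and k = k and \<nu> = r and as = as and bs = bs and cs = cs and \<mu> = \<mu>, OF k1 r0 bl] hom by simp
  have ex0: "x 0 = fst e" unfolding x_def xs_of_def by simp
  have ex1: "x 1 = snd e"
  proof -
    have "e = (xs_of e 0, xs_of e 1)" using St_xs[of 0 e] by simp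
    then show ?thesis unfolding x_def by (metis snd_conv)
  qed
  have vnz: "vec k x \<noteq> 0\<^sub>v k"
  proof
    assume h: "vec k x = 0\<^sub>v k"
    have x0: "x 0 = 0"
    proof -
      have "vec k x $ 0 = 0\<^sub>v k $ 0" using h by simp
      then show ?thesis using k1 by simp
    qed
    have x1: "x 1 = 0"
    proof (cases "k = 1")
      case True
      then show ?thesis using bl[of 0] x0 by simp
    next
      case False
      have "vec k x $ 1 = 0\<^sub>v k $ 1" using h by simp
      then show ?thesis using k1 False by simp
    qed
    show False using e(1) x0 x1 ex0 ex1 by (simp add: prod_eq_iff)
  qed
  have "det (Sm k as bs cs \<mu> (1 / r)) = 0"
    using det_0_iff_vec_prod_zero[OF Sm_carrier[of k as bs cs \<mu> "1/r"]] M0 vnz vec_carrier[of k x] by blast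
  then have "1 < cmod (1 / r)" using Z r0 by simp
  moreover have "cmod (1 / r) \<le> 1" using r1 by (simp add: norm_divide divide_le_eq)
  ultimately show False by simp
qed

lemma Fpow_bound:
  assumes r12: "r1 + r2 = trF" "r1 * r2 = dtF" and rp: "0 < \<rho>" and rr: "cmod r1 \<le> \<rho>" "cmod r2 \<le> \<rho>"
  shows "nn ((F ^^ n) s) \<le> max 1 ((KS k + cmod dtF / \<rho>) / \<rho>) * (real n + 1) * \<rho> ^ n * nn s"
proof (cases n)
  case 0
  have "1 * nn s \<le> max 1 ((KS k + cmod dtF / \<rho>) / \<rho>) * nn s"
    by (rule mult_right_mono[OF max.cobounded1 nn_nonneg])
  then show ?thesis using 0 by simp
next
  case (Suc m)
  define L where "L = KS k + cmod dtF / \<rho>"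
  have L0: "L \<ge> 0" unfolding L_def using KS_nonneg rp by simp
  have s1: "cmod (sg r1 r2 (Suc m)) \<le> real (Suc m) * \<rho> ^ m"
  proof -
    have "\<rho> * cmod (sg r1 r2 (Suc m)) \<le> real (Suc m) * \<rho> ^ Suc m"
      using sg_bound[of \<rho> r1 r2 "Suc m"] rp rr by simp
    also have "\<dots> = \<rho> * (real (Suc m) * \<rho> ^ m)" by simp
    finally show ?thesis using rp by (simp add: mult_le_cancel_left_pos)
  qed
  have s0: "cmod (sg r1 r2 m) \<le> real (Suc m) * \<rho> ^ m / \<rho>"
  proof -
    have "\<rho> * cmod (sg r1 r2 m) \<le> real m * \<rho> ^ m"
      using sg_bound[of \<rho> r1 r2 m] rp rr by simp
    also have "\<dots> \<le> real (Suc m) * \<rho> ^ m" using rp by (intro mult_right_mono) auto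
    finally show ?thesis using rp by (simp add: pos_le_divide_eq mult.commute)
  qed
  have "nn ((F ^^ n) s) = nn (lc (sg r1 r2 (Suc m)) (- dtF * sg r1 r2 m) (F s) s)"
    unfolding Suc Fpow[OF r12] ..
  also have "\<dots> \<le> cmod (sg r1 r2 (Suc m)) * nn (F s) + cmod (- dtF * sg r1 r2 m) * nn s"
    by (rule nn_lc)
  also have "\<dots> \<le> (real (Suc m) * \<rho> ^ m) * (KS k * nn s) + (cmod dtF * (real (Suc m) * \<rho> ^ m / \<rho>)) * nn s"
  proof (rule add_mono)
    show "cmod (sg r1 r2 (Suc m)) * nn (F s) \<le> (real (Suc m) * \<rho> ^ m) * (KS k * nn s)"
    proof (rule mult_mono)
      show "cmod (sg r1 r2 (Suc m)) \<le> real (Suc m) * \<rho> ^ m" by (rule s1)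
      show "nn (F s) \<le> KS k * nn s" unfolding F_def by (rule nn_St)
      show "0 \<le> real (Suc m) * \<rho> ^ m" using rp by simp
      show "0 \<le> nn (F s)" by (rule nn_nonneg)
    qed
    show "cmod (- dtF * sg r1 r2 m) * nn s \<le> (cmod dtF * (real (Suc m) * \<rho> ^ m / \<rho>)) * nn s"
      unfolding norm_mult norm_minus_cancel
      by (intro mult_right_mono mult_left_mono s0 nn_nonneg norm_ge_zero)
  qed
  also have "\<dots> = (L / \<rho>) * (real m + 1) * \<rho> ^ Suc m * nn s"
    unfolding L_def using rp by (simp add: field_simps)
  also have "\<dots> \<le> max 1 (L / \<rho>) * (real n + 1) * \<rho> ^ n * nn s"
    unfolding Suc using rp L0 nn_nonneg[of s]
    by (intro mult_right_mono mult_mono) auto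
  finally show ?thesis unfolding L_def .
qed

lemma Tpert_xs:
  assumes "bs 1 * x1 = - (as 1 + a - \<mu>)"
  shows "Tpert k a as bs cs (xs_of (1, x1)) = (\<lambda>i. \<mu> * xs_of (1, x1) i)"
proof
  fix r
  let ?x = "xs_of (1, x1)"
  have e0: "?x 0 = 1" unfolding xs_of_def by simp
  have e1: "?x 1 = x1" using St_xs[of 0 "(1, x1)"] by simp
  show "Tpert k a as bs cs ?x r = \<mu> * ?x r"
  proof (cases "r = 0")
    case True
    have p0: "per k 0 = 1" unfolding per_def by simp
    show ?thesis unfolding Tpert_def True p0 using e0 e1 assms by (simp add: algebra_simps)
  next
    case False
    have "Rrow k as bs cs \<mu> ?x r = 0" using hom_xs False by simp
    then show ?thesis unfolding Tpert_def Rrow_def using False by (simp add: algebra_simps)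
  qed
qed

lemma main_eig:
  assumes Z: "\<And>w. w \<noteq> 0 \<Longrightarrow> det (Sm k as bs cs \<mu> w) = 0 \<Longrightarrow> 1 < cmod w"
  shows "\<exists>C>0. \<forall>a. \<exists>x \<rho>. l2 x \<and> x \<noteq> (\<lambda>_. 0) \<and> Tpert k a as bs cs x = (\<lambda>i. \<mu> * x i) \<and> \<rho> < 1 \<and> decay_bound k C \<rho> x"
proof -
  define sq where "sq = csqrt (trF\<^sup>2 - 4 * dtF)"
  define r1 where "r1 = (trF + sq) / 2"
  define r2 where "r2 = (trF - sq) / 2"
  have sq2: "sq\<^sup>2 = trF\<^sup>2 - 4 * dtF" unfolding sq_def by simp
  have r12: "r1 + r2 = trF" "r1 * r2 = dtF"
  proof -
    show "r1 + r2 = trF" unfolding r1_def r2_def by (simp add: field_simps)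
    have "r1 * r2 = (trF\<^sup>2 - sq\<^sup>2) / 4" unfolding r1_def r2_def by (simp add: field_simps power2_eq_square)
    then show "r1 * r2 = dtF" unfolding sq2 by simp
  qed
  have "r1 * r1 = trF * r1 - dtF" using r12 by (simp add: algebra_simps) (metis add.commute mult.commute ring_class.ring_distribs(1))
  hence a1: "cmod r1 < 1" using root_small Z by blast
  have "r2 * r2 = trF * r2 - dtF" using r12 by (simp add: algebra_simps) (metis add.commute mult.commute ring_class.ring_distribs(1))
  hence a2: "cmod r2 < 1" using root_small Z by blast
  define \<rho> where "\<rho> = max (max (cmod r1) (cmod r2)) (1/2)"
  have rp: "0 < \<rho>" and rl: "\<rho> < 1" and rr: "cmod r1 \<le> \<rho>" "cmod r2 \<le> \<rho>"
    unfolding \<rho>_def using a1 a2 by auto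
  define Kp where "Kp = max 1 ((KS k + cmod dtF / \<rho>) / \<rho>)"
  define Kt where "Kt = (\<Sum>t<k. KS t)"
  have Kt: "KS t \<le> Kt" if "t < k" for t
    unfolding Kt_def using that KS_nonneg by (intro member_le_sum) auto
  have KS0: "KS 0 = 2" unfolding KS_def nn_def by simp
  have Ktp: "Kt > 0" using Kt[of 0] k1 KS0 by simp
  have Kp1: "Kp \<ge> 1" unfolding Kp_def by simp
  have key: "cmod (xs_of s (m * k + t)) \<le> Kt * Kp * (real m + 1) * \<rho> ^ m * nn s" if t: "t < k" for s m t
  proof -
    have "xs_of s (m * k + t) = fst (St t ((F ^^ m) s))"
      using St_mk[of t m s] unfolding xs_of_def by (simp add: add.commute)
    also have "cmod \<dots> \<le> nn (St t ((F ^^ m) s))" unfolding nn_def by simp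
    also have "\<dots> \<le> KS t * nn ((F ^^ m) s)" by (rule nn_St)
    also have "\<dots> \<le> Kt * (Kp * (real m + 1) * \<rho> ^ m * nn s)"
    proof (rule mult_mono)
      show "KS t \<le> Kt" using Kt t .
      show "nn ((F ^^ m) s) \<le> Kp * (real m + 1) * \<rho> ^ m * nn s"
        unfolding Kp_def by (rule Fpow_bound[OF r12 rp rr])
      show "0 \<le> Kt" using Ktp by simp
      show "0 \<le> nn ((F ^^ m) s)" by (rule nn_nonneg)
    qed
    finally show ?thesis by (simp add: algebra_simps)
  qed
  define C where "C = 2 * Kt * Kp"
  have Cp: "C > 0" unfolding C_def using Ktp Kp1 by simp
  show ?thesis
  proof (intro exI[of _ C] conjI allI Cp)
    fix a
    define x1 where "x1 = - (as 1 + a - \<mu>) / bs 1"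
    have b1: "bs 1 \<noteq> 0" using bnz k1 by simp
    define s0 where "s0 = (1::complex, x1)"
    define x where "x = xs_of s0"
    have x0: "x 0 = 1" unfolding x_def xs_of_def s0_def by simp
    have x1e: "x 1 = x1" using St_xs[of 0 s0] unfolding x_def s0_def by simp
    have ns0: "nn s0 = cmod (x 0) + cmod (x 1)" unfolding nn_def s0_def x0 x1e by simp
    have Tx: "Tpert k a as bs cs x = (\<lambda>i. \<mu> * x i)"
      unfolding x_def s0_def by (rule Tpert_xs) (use b1 in \<open>simp add: x1_def\<close>)
    have bnd: "cmod (x i) \<le> Kt * Kp * nn s0 * ((real (i div k) + 1) * \<rho> ^ (i div k))" for i
    proof -
      have "x i = xs_of s0 ((i div k) * k + i mod k)" unfolding x_def by simp
      then have "cmod (x i) \<le> Kt * Kp * (real (i div k) + 1) * \<rho> ^ (i div k) * nn s0"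
        using key[of "i mod k" s0 "i div k"] k1 by simp
      then show ?thesis by (simp add: algebra_simps)
    qed
    define q where "q = sqrt \<rho>"
    have q0: "0 \<le> q" and q1: "q < 1" and qq: "q * q = \<rho>" unfolding q_def using rp rl by auto
    define B where "B = Kt * Kp * nn s0 / (1 - q)"
    have B0: "B \<ge> 0" unfolding B_def using Ktp Kp1 nn_nonneg[of s0] q1 by simp
    have bnd2: "cmod (x i) \<le> B * q ^ (i div k)" for i
    proof -
      have "(real (i div k) + 1) * \<rho> ^ (i div k) = (real (Suc (i div k)) * q ^ (i div k)) * q ^ (i div k)"
        unfolding qq[symmetric] by (simp add: power_mult_distrib)
      also have "\<dots> \<le> (1 / (1 - q)) * q ^ (i div k)"
        using q0 q1 by (intro mult_right_mono geo_lin_bound) auto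
      finally have "(real (i div k) + 1) * \<rho> ^ (i div k) \<le> (1 / (1 - q)) * q ^ (i div k)" .
      then have "Kt * Kp * nn s0 * ((real (i div k) + 1) * \<rho> ^ (i div k)) \<le> Kt * Kp * nn s0 * ((1 / (1 - q)) * q ^ (i div k))"
        using Ktp Kp1 nn_nonneg[of s0] by (intro mult_left_mono) auto
      then show ?thesis using bnd[of i] unfolding B_def by simp
    qed
    have l2x: "l2 x"
      unfolding l2_def
    proof (rule summable_comparison_test[where g = "\<lambda>i. B\<^sup>2 * \<rho> ^ (i div k)"])
      show "\<exists>N. \<forall>n\<ge>N. norm ((cmod (x n))\<^sup>2) \<le> B\<^sup>2 * \<rho> ^ (n div k)"
      proof (intro exI allI impI)
        fix n :: nat
        have "(cmod (x n))\<^sup>2 \<le> (B * q ^ (n div k))\<^sup>2"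
          using bnd2[of n] by (intro power_mono) auto
        also have "\<dots> = B\<^sup>2 * \<rho> ^ (n div k)"
          unfolding qq[symmetric] by (simp add: power_mult_distrib power2_eq_square)
        finally show "norm ((cmod (x n))\<^sup>2) \<le> B\<^sup>2 * \<rho> ^ (n div k)" by simp
      qed
      show "summable (\<lambda>i. B\<^sup>2 * \<rho> ^ (i div k))"
        using summable_div_nat[of "\<lambda>m. B\<^sup>2 * \<rho> ^ m" k] rp rl k1
        by (simp add: summable_mult summable_geometric)
    qed
    have bddx: "bdd_above (range (\<lambda>i. cmod (x i)))"
    proof (rule bdd_aboveI2)
      fix i
      have "q ^ (i div k) \<le> 1" using q0 q1 by (simp add: power_le_one)
      then have "B * q ^ (i div k) \<le> B" using B0 by (simp add: mult_left_le)
      then show "cmod (x i) \<le> B" using bnd2[of i] by simp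
    qed
    define S where "S = (SUP i. cmod (x i))"
    have Sge: "cmod (x i) \<le> S" for i unfolding S_def by (rule cSUP_upper[OF _ bddx]) simp
    have S1: "S \<ge> 1" using Sge[of 0] x0 by simp
    have ns0S: "nn s0 \<le> 2 * S" using Sge[of 0] Sge[of 1] ns0 by simp
    have dec: "decay_bound k C \<rho> x"
      unfolding decay_bound_def S_def[symmetric]
    proof (intro allI impI)
      fix j :: nat assume j: "1 \<le> j"
      define m where "m = (j - 1) div k"
      have ce: "\<lceil>real j / real k\<rceil> = int m + 1" unfolding m_def by (rule ceil_div[OF k1 j])
      have "cmod (x (j - 1)) \<le> Kt * Kp * nn s0 * ((real m + 1) * \<rho> ^ m)"
        using bnd[of "j - 1"] unfolding m_def .
      also have "\<dots> \<le> Kt * Kp * (2 * S) * ((real m + 1) * \<rho> ^ m)"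
        using ns0S Ktp Kp1 rp by (intro mult_right_mono mult_left_mono) auto
      also have "\<dots> = (C * (real m + 1) * \<rho> ^ m) * S" unfolding C_def by (simp add: algebra_simps)
      finally have "cmod (x (j - 1)) / S \<le> C * (real m + 1) * \<rho> ^ m"
        using S1 by (simp add: pos_divide_le_eq)
      moreover have "int m + 1 = int (Suc m)" by simp
      ultimately show "cmod (x (j - 1)) / S \<le> C * real_of_int \<lceil>real j / real k\<rceil> * \<rho> ^ (nat \<lceil>real j / real k\<rceil> - 1)"
        unfolding ce by (metis diff_Suc_1 nat_int of_int_of_nat_eq of_nat_Suc add.commute)
    qed
    have xnz: "x \<noteq> (\<lambda>_. 0)" using x0 by (metis one_neq_zero)
    show "\<exists>x \<rho>. l2 x \<and> x \<noteq> (\<lambda>_. 0) \<and> Tpert k a as bs cs x = (\<lambda>i. \<mu> * x i) \<and> \<rho> < 1 \<and> decay_bound k C \<rho> x"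
      using l2x xnz Tx rl dec by blast
  qed
qed

end



lemma sq_diff_summable:
  fixes f :: "nat \<Rightarrow> real"
  assumes b: "\<And>i. 0 \<le> f i" "\<And>i. f i \<le> 1" and d: "\<And>i. f (Suc i) \<le> f i"
  shows "summable (\<lambda>i. (f i - f (Suc i))\<^sup>2)"
proof (rule summableI_nonneg_bounded)
  fix n
  have "(\<Sum>i<n. (f i - f (Suc i))\<^sup>2) \<le> (\<Sum>i<n. f i - f (Suc i))"
  proof (rule sum_mono)
    fix i
    have "0 \<le> f i - f (Suc i)" "f i - f (Suc i) \<le> 1" using b d[of i] by (auto simp: algebra_simps) (smt (verit) b)
    then show "(f i - f (Suc i))\<^sup>2 \<le> f i - f (Suc i)" by (simp add: power2_eq_square mult_left_le)
  qed
  also have "\<dots> = f 0 - f n" by (rule sum_lessThan_telescope')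
  also have "\<dots> \<le> 1" using b by (smt (verit))
  finally show "(\<Sum>i<n. (f i - f (Suc i))\<^sup>2) \<le> 1" .
qed simp

lemma tail_tendsto:
  fixes f :: "nat \<Rightarrow> real"
  assumes s: "summable f" and nn: "\<And>i. 0 \<le> f i"
  shows "(\<lambda>N. suminf (\<lambda>r. if N \<le> r then f r else 0)) \<longlonglongrightarrow> 0"
proof -
  have e: "suminf (\<lambda>r. if N \<le> r then f r else 0) = suminf f - (\<Sum>i<N. f i)" for N
  proof -
    have sg: "summable (\<lambda>r. if N \<le> r then f r else 0)"
      by (rule summable_comparison_test'[where g = f and N = 0]) (use s nn in auto)
    have "suminf (\<lambda>r. if N \<le> r then f r else 0) = (\<Sum>n. (\<lambda>r. if N \<le> r then f r else 0) (n + N)) + (\<Sum>i<N. (\<lambda>r. if N \<le> r then f r else 0) i)"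
      by (rule suminf_split_initial_segment[OF sg])
    also have "\<dots> = (\<Sum>n. f (n + N))" by simp
    also have "\<dots> = suminf f - (\<Sum>i<N. f i)" by (rule suminf_minus_initial_segment[OF s])
    finally show ?thesis .
  qed
  have "(\<lambda>N. suminf f - (\<Sum>i<N. f i)) \<longlonglongrightarrow> suminf f - suminf f"
    by (intro tendsto_intros summable_LIMSEQ s)
  then show ?thesis unfolding e by simp
qed

lemma l2norm_lim:
  fixes e :: "nat \<Rightarrow> nat \<Rightarrow> complex"
  assumes b: "\<And>N r. (cmod (e N r))\<^sup>2 \<le> h N r" and s: "\<And>N. summable (h N)"
    and t: "(\<lambda>N. suminf (h N)) \<longlonglongrightarrow> 0"
  shows "(\<lambda>N. l2norm (e N)) \<longlonglongrightarrow> 0"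
proof (rule tendsto_sandwich[where f = "\<lambda>_. 0" and h = "\<lambda>N. sqrt (suminf (h N))"])
  have se: "summable (\<lambda>r. (cmod (e N r))\<^sup>2)" for N
    by (rule summable_comparison_test'[where g = "h N" and N = 0]) (use b s in auto)
  have le: "suminf (\<lambda>r. (cmod (e N r))\<^sup>2) \<le> suminf (h N)" for N
    by (rule suminf_le[OF b se s])
  have ge: "0 \<le> suminf (\<lambda>r. (cmod (e N r))\<^sup>2)" for N by (rule suminf_nonneg[OF se]) simp
  show "\<forall>\<^sub>F N in sequentially. 0 \<le> l2norm (e N)" unfolding l2norm_def using ge by simp
  show "\<forall>\<^sub>F N in sequentially. l2norm (e N) \<le> sqrt (suminf (h N))"
    unfolding l2norm_def using le by simp
  show "(\<lambda>_. 0) \<longlonglongrightarrow> (0::real)" by simp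
  have "(\<lambda>N. sqrt (suminf (h N))) \<longlonglongrightarrow> sqrt 0" by (intro tendsto_intros t)
  then show "(\<lambda>N. sqrt (suminf (h N))) \<longlonglongrightarrow> 0" by simp
qed

lemma summable_sub:
  fixes f :: "nat \<Rightarrow> real"
  assumes s: "summable f" and nn: "\<And>i. 0 \<le> f i" and k: "k \<ge> 1"
  shows "summable (\<lambda>m. f (m * k + j))"
proof (rule summableI_nonneg_bounded)
  show "0 \<le> f (m * k + j)" for m using nn .
  fix n
  have inj: "inj_on (\<lambda>m. m * k + j) {..<n}" using k by (auto simp: inj_on_def)
  have "(\<Sum>m<n. f (m * k + j)) = sum f ((\<lambda>m. m * k + j) ` {..<n})"
    by (simp add: sum.reindex[OF inj])
  also have "\<dots> \<le> suminf f" by (rule sum_le_suminf[OF s]) (use nn in auto)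
  finally show "(\<Sum>m<n. f (m * k + j)) \<le> suminf f" .
qed

definition phi :: "nat \<Rightarrow> real" where "phi m = sqrt (inverse (real (Suc m)))"

lemma phi_nonneg: "0 \<le> phi m" unfolding phi_def by simp
lemma phi_le1: "phi m \<le> 1"
proof -
  have "inverse (real (Suc m)) \<le> 1" by (simp add: inverse_le_1_iff)
  then show ?thesis unfolding phi_def by simp
qed
lemma phi_mono: "m \<le> n \<Longrightarrow> phi n \<le> phi m" unfolding phi_def
  by (intro real_sqrt_le_mono) (simp add: le_imp_inverse_le)
lemma phi_sq: "(phi m)\<^sup>2 = inverse (real (Suc m))" unfolding phi_def by simp
lemma phi_lim: "phi \<longlonglongrightarrow> 0"
proof -
  have "(\<lambda>m. sqrt (inverse (real (Suc m)))) \<longlonglongrightarrow> sqrt 0"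
    by (intro tendsto_intros LIMSEQ_inverse_real_of_nat)
  then show ?thesis unfolding phi_def[abs_def] by simp
qed
lemma phi_not_summable: "\<not> summable (\<lambda>m. (phi m)\<^sup>2)"
proof
  assume "summable (\<lambda>m. (phi m)\<^sup>2)"
  then have "summable (\<lambda>m. inverse (real (Suc m)))" unfolding phi_sq .
  then have "summable (\<lambda>m. inverse (real m))" using summable_Suc_iff[of "\<lambda>m. inverse (real m)"] by simp
  then show False using not_summable_harmonic[where 'a = real] by simp
qed


definition Lop :: "nat \<Rightarrow> complex \<Rightarrow> (nat \<Rightarrow> complex) \<Rightarrow> (nat \<Rightarrow> complex) \<Rightarrow> (nat \<Rightarrow> complex) \<Rightarrow> complex \<Rightarrow> (nat \<Rightarrow> complex) \<Rightarrow> nat \<Rightarrow> complex" where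
  "Lop k a as bs cs \<mu> z = (\<lambda>i. Tpert k a as bs cs z i - \<mu> * z i)"

lemma Lop_row: "r \<ge> 1 \<Longrightarrow> Lop k a as bs cs \<mu> z r = Rrow k as bs cs \<mu> z r"
  unfolding Lop_def Tpert_def Rrow_def by (simp add: algebra_simps)

lemma Lop_local:
  assumes "z (r - 1) = z' (r - 1)" "z r = z' r" "z (Suc r) = z' (Suc r)"
  shows "Lop k a as bs cs \<mu> z r = Lop k a as bs cs \<mu> z' r"
  unfolding Lop_def Tpert_def using assms by simp

lemma Lop_zero: "Lop k a as bs cs \<mu> (\<lambda>_. 0) r = 0"
  unfolding Lop_def Tpert_def by simp

lemma Rrow_prod:
  "Rrow k as bs cs \<mu> (\<lambda>i. f i * g i) r = f r * Rrow k as bs cs \<mu> g r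
     + bs (per k r) * (f (Suc r) - f r) * g (Suc r) + cs (per k (r - 1)) * (f (r - 1) - f r) * g (r - 1)"
  unfolding Rrow_def by (simp add: algebra_simps)

lemma Rrow_diff: "Rrow k as bs cs \<mu> (\<lambda>i. x i - z i) r = Rrow k as bs cs \<mu> x r - Rrow k as bs cs \<mu> z r"
  unfolding Rrow_def by (simp add: algebra_simps)

lemma lim_shift_minus: "f \<longlonglongrightarrow> l \<Longrightarrow> (\<lambda>N. f (N - c)) \<longlonglongrightarrow> l"
  by (rule filterlim_compose[OF _ filterlim_minus_const_nat_at_top])

lemma lim_div: assumes "f \<longlonglongrightarrow> (0::real)" "k \<ge> 1" shows "(\<lambda>i. f (i div k)) \<longlonglongrightarrow> 0"
proof (rule LIMSEQ_I)
  fix r :: real assume "0 < r"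
  then obtain M where M: "\<forall>n\<ge>M. norm (f n - 0) < r" using LIMSEQ_D[OF assms(1)] by blast
  show "\<exists>no. \<forall>n\<ge>no. norm (f (n div k) - 0) < r"
  proof (intro exI allI impI)
    fix n assume "M * k \<le> n"
    then have "M * k div k \<le> n div k" by (rule div_le_mono)
    then have "M \<le> n div k" using assms(2) by simp
    then show "norm (f (n div k) - 0) < r" using M by blast
  qed
qed

lemma l2_lim: assumes "l2 z" shows "(\<lambda>r. cmod (z r)) \<longlonglongrightarrow> 0"
proof -
  have "(\<lambda>r. (cmod (z r))\<^sup>2) \<longlonglongrightarrow> 0" using assms unfolding l2_def by (rule summable_LIMSEQ_zero)
  then have "(\<lambda>r. sqrt ((cmod (z r))\<^sup>2)) \<longlonglongrightarrow> sqrt 0" by (intro tendsto_intros)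
  then show ?thesis by simp
qed

lemma sq_sum_real: "(a + b)\<^sup>2 \<le> 2 * a\<^sup>2 + 2 * (b::real)\<^sup>2"
proof -
  have "0 \<le> (a - b)\<^sup>2" by simp
  moreover have "(a + b)\<^sup>2 = 2 * a\<^sup>2 + 2 * b\<^sup>2 - (a - b)\<^sup>2" by (simp add: power2_eq_square algebra_simps)
  ultimately show ?thesis by linarith
qed

lemma sq_sum_le: "(cmod (p + q))\<^sup>2 \<le> 2 * (cmod p)\<^sup>2 + 2 * (cmod q)\<^sup>2"
proof -
  have "cmod (p + q) \<le> cmod p + cmod q" by (rule norm_triangle_ineq)
  then have "(cmod (p + q))\<^sup>2 \<le> (cmod p + cmod q)\<^sup>2" by (intro power_mono) auto
  also have "\<dots> \<le> 2 * (cmod p)\<^sup>2 + 2 * (cmod q)\<^sup>2" by (rule sq_sum_real)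
  finally show ?thesis .
qed

lemma tri_swap: "tri k bs cs \<Longrightarrow> tri k cs bs"
  unfolding tri_def by auto

context tri
begin

definition W :: "(nat \<Rightarrow> complex) \<Rightarrow> (nat \<Rightarrow> complex) \<Rightarrow> nat \<Rightarrow> complex" where
  "W u z r = bs (per k r) * u r * z (Suc r) - cs (per k r) * u (Suc r) * z r"

lemma W_step: "W u z (Suc r) - W u z r = u (Suc r) * Rrow k as bs cs \<mu> z (Suc r) - z (Suc r) * Rrow k as cs bs \<mu> u (Suc r)"
  unfolding W_def Rrow_def by (simp add: algebra_simps)

lemma W_const:
  assumes "\<And>r. r \<ge> 1 \<Longrightarrow> Rrow k as bs cs \<mu> z r = 0" "\<And>r. r \<ge> 1 \<Longrightarrow> Rrow k as cs bs \<mu> u r = 0"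
  shows "W u z r = W u z 0"
proof (induction r)
  case (Suc r)
  have "W u z (Suc r) - W u z r = 0" unfolding W_step using assms by simp
  then show ?case using Suc by simp
qed simp

lemma xs_lc: "xs_of (lc p q e e') i = p * xs_of e i + q * xs_of e' i"
  unfolding xs_of_def St_lc by (simp add: lc_def)

lemma xs_zero: "xs_of (0, 0) i = 0"
  using xs_lc[of 0 0 "(0,0)" "(0,0)" i] by (simp add: lc_def)

definition Kb :: real where "Kb = (\<Sum>j=1..k. cmod (bs j))"
definition Kc :: real where "Kc = (\<Sum>j=1..k. cmod (cs j))"
definition Ka :: real where "Ka = (\<Sum>j=1..k. cmod (as j))"

lemma per_in: "per k r \<in> {1..k}" using per_ge per_le by simp

lemma Kb_le: "cmod (bs (per k r)) \<le> Kb"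
  unfolding Kb_def by (rule member_le_sum[OF per_in]) auto
lemma Kc_le: "cmod (cs (per k r)) \<le> Kc"
  unfolding Kc_def by (rule member_le_sum[OF per_in]) auto
lemma Ka_le: "cmod (as (per k r)) \<le> Ka"
  unfolding Ka_def by (rule member_le_sum[OF per_in]) auto
lemma Kb_nonneg: "Kb \<ge> 0" unfolding Kb_def by (simp add: sum_nonneg)
lemma Kc_nonneg: "Kc \<ge> 0" unfolding Kc_def by (simp add: sum_nonneg)
lemma Ka_nonneg: "Ka \<ge> 0" unfolding Ka_def by (simp add: sum_nonneg)

lemma norm3: "cmod (x + y + z) \<le> cmod x + cmod y + cmod z"
  by (metis add_mono norm_triangle_ineq order.trans order_refl)

lemma Lop_bound:
  "cmod (Lop k a as bs cs \<mu> z r) \<le> (Ka + cmod a + cmod \<mu> + Kb + Kc) * (cmod (z (r - 1)) + cmod (z r) + cmod (z (Suc r)))"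
proof -
  define A0 where "A0 = as (per k r) + (if r = 0 then a else 0) - \<mu>"
  define C0 where "C0 = (if r = 0 then 0 else cs (per k (r - 1)) * z (r - 1))"
  define K where "K = Ka + cmod a + cmod \<mu> + Kb + Kc"
  have L: "Lop k a as bs cs \<mu> z r = A0 * z r + bs (per k r) * z (Suc r) + C0"
    unfolding Lop_def Tpert_def A0_def C0_def by (simp add: algebra_simps)
  have A0b: "cmod A0 \<le> K"
  proof -
    have "cmod A0 \<le> cmod (as (per k r)) + cmod (if r = 0 then a else 0) + cmod \<mu>"
      unfolding A0_def by (metis diff_conv_add_uminus norm3 norm_minus_cancel)
    also have "\<dots> \<le> Ka + cmod a + cmod \<mu>" using Ka_le[of r] norm_ge_zero[of a] by (cases "r = 0") (auto simp: add_increasing2)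
    also have "\<dots> \<le> K" unfolding K_def using Kb_nonneg Kc_nonneg by linarith
    finally show ?thesis .
  qed
  have K0: "0 \<le> K" unfolding K_def using Ka_nonneg Kb_nonneg Kc_nonneg norm_ge_zero[of a] norm_ge_zero[of \<mu>] by linarith
  have Bb: "cmod (bs (per k r)) \<le> K" unfolding K_def using Kb_le[of r] Ka_nonneg Kc_nonneg norm_ge_zero[of a] norm_ge_zero[of \<mu>] by linarith
  have C0b: "cmod C0 \<le> K * cmod (z (r - 1))"
  proof -
    have "cmod (cs (per k (r - 1))) \<le> K" unfolding K_def using Kc_le[of "r - 1"] Ka_nonneg Kb_nonneg norm_ge_zero[of a] norm_ge_zero[of \<mu>] by linarith
    then show ?thesis unfolding C0_def using K0 by (auto simp: norm_mult intro: mult_right_mono)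
  qed
  have "cmod (Lop k a as bs cs \<mu> z r) \<le> cmod (A0 * z r) + cmod (bs (per k r) * z (Suc r)) + cmod C0"
    unfolding L by (rule norm3)
  also have "\<dots> \<le> K * cmod (z r) + K * cmod (z (Suc r)) + K * cmod (z (r - 1))"
    unfolding norm_mult using A0b Bb C0b by (intro add_mono mult_right_mono) auto
  finally show ?thesis unfolding K_def by (simp add: algebra_simps)
qed

end

lemma two_dim:
  fixes b c u0 u1 g0 g1 h0 h1 :: complex
  assumes "b \<noteq> 0" "c \<noteq> 0" "(u0, u1) \<noteq> (0, 0)" "(g0, g1) \<noteq> (0, 0)"
    and "b * u0 * g1 - c * u1 * g0 = 0" "b * u0 * h1 - c * u1 * h0 = 0"
  shows "\<exists>\<alpha>. h0 = \<alpha> * g0 \<and> h1 = \<alpha> * g1"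
proof (cases "u0 = 0")
  case True
  then have u1: "u1 \<noteq> 0" using assms(3) by simp
  then have "g0 = 0" "h0 = 0" using assms(2,5,6) True by auto
  then have "g1 \<noteq> 0" using assms(4) by simp
  then show ?thesis using \<open>g0 = 0\<close> \<open>h0 = 0\<close> by (intro exI[of _ "h1 / g1"]) simp
next
  case False
  have g1: "g1 = c * u1 * g0 / (b * u0)" using assms(1,5) False by (simp add: field_simps)
  have h1: "h1 = c * u1 * h0 / (b * u0)" using assms(1,6) False by (simp add: field_simps)
  have "g0 \<noteq> 0" using assms(4) g1 by auto
  then show ?thesis using g1 h1 by (intro exI[of _ "h0 / g0"]) (simp add: field_simps)
qed

context tri
begin

lemma hom_zero:
  assumes "\<And>r. r \<ge> 1 \<Longrightarrow> Rrow k as bs cs \<mu> x r = 0" and "x 0 = 0" "x 1 = 0"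
  shows "x i = 0"
  using hom_unique[OF assms(1), of i] assms(2,3) xs_zero by simp

lemma no_fredholm:
  assumes homg: "\<And>r. r \<ge> 1 \<Longrightarrow> Rrow k as bs cs \<mu> g r = 0"
    and homu: "\<And>r. r \<ge> 1 \<Longrightarrow> Rrow k as cs bs \<mu> u r = 0"
    and gb: "\<And>i. cmod (g i) \<le> Kg" and ub: "\<And>i. cmod (u i) \<le> Ku"
    and gj: "\<And>m. cmod (g (m * k + j0)) = \<gamma>0" and \<gamma>0: "\<gamma>0 > 0" and j0: "j0 < k"
    and g01: "(g 0, g 1) \<noteq> (0, 0)" and u01: "(u 0, u 1) \<noteq> (0, 0)"
  shows "\<not> fredholm_l2 (Lop k a as bs cs \<mu>)"
proof
  assume Fr: "fredholm_l2 (Lop k a as bs cs \<mu>)"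
  let ?L = "Lop k a as bs cs \<mu>"
  have C2: "\<And>xs y. (\<forall>n. l2 (xs n)) \<Longrightarrow> l2 y \<Longrightarrow> (\<lambda>n. l2norm (\<lambda>i. ?L (xs n) i - y i)) \<longlonglongrightarrow> 0 \<Longrightarrow> \<exists>x. l2 x \<and> ?L x = y"
    using Fr unfolding fredholm_l2_def by blast
  have Kg0: "Kg \<ge> 0" using gb[of 0] norm_ge_zero order.trans by blast
  have Ku0: "Ku \<ge> 0" using ub[of 0] norm_ge_zero order.trans by blast
  define \<Phi> where "\<Phi> i = phi (i div k)" for i
  have \<Phi>0: "0 \<le> \<Phi> i" and \<Phi>1: "\<Phi> i \<le> 1" for i unfolding \<Phi>_def by (simp_all add: phi_nonneg phi_le1)
  have \<Phi>d: "\<Phi> (Suc i) \<le> \<Phi> i" for i unfolding \<Phi>_def by (intro phi_mono div_le_mono) simp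
  have \<Phi>lim: "\<Phi> \<longlonglongrightarrow> 0" unfolding \<Phi>_def[abs_def] by (rule lim_div[OF phi_lim k1])
  have \<Phi>mk: "\<Phi> (m * k + j) = phi m" if "j < k" for m j unfolding \<Phi>_def using that by simp
  define d where "d i = \<Phi> i - \<Phi> (Suc i)" for i
  have d0: "0 \<le> d i" for i unfolding d_def using \<Phi>d by simp
  have sd: "summable (\<lambda>i. (d i)\<^sup>2)" unfolding d_def by (rule sq_diff_summable[of \<Phi>, OF \<Phi>0 \<Phi>1 \<Phi>d])
  have dlim: "d \<longlonglongrightarrow> 0"
  proof -
    have "(\<lambda>i. \<Phi> i - \<Phi> (Suc i)) \<longlonglongrightarrow> 0 - 0" by (intro tendsto_intros \<Phi>lim LIMSEQ_Suc)
    then show ?thesis unfolding d_def[abs_def] by simp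
  qed
  define X where "X i = complex_of_real (\<Phi> i) * g i" for i
  define y where "y = ?L X"
  have yrow: "y r = - bs (per k r) * complex_of_real (d r) * g (Suc r) + cs (per k (r - 1)) * complex_of_real (d (r - 1)) * g (r - 1)"
    if r: "r \<ge> 1" for r
  proof -
    have "y r = Rrow k as bs cs \<mu> X r" unfolding y_def using r by (rule Lop_row)
    also have "\<dots> = complex_of_real (\<Phi> r) * Rrow k as bs cs \<mu> g r
      + bs (per k r) * (complex_of_real (\<Phi> (Suc r)) - complex_of_real (\<Phi> r)) * g (Suc r)
      + cs (per k (r - 1)) * (complex_of_real (\<Phi> (r - 1)) - complex_of_real (\<Phi> r)) * g (r - 1)"
      unfolding X_def by (rule Rrow_prod)
    also have "\<dots> = - bs (per k r) * complex_of_real (d r) * g (Suc r) + cs (per k (r - 1)) * complex_of_real (d (r - 1)) * g (r - 1)"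
    proof -
      have "Suc (r - 1) = r" using r by simp
      then have "d (r - 1) = \<Phi> (r - 1) - \<Phi> r" unfolding d_def by simp
      then show ?thesis using homg[OF r] unfolding d_def by (simp add: algebra_simps)
    qed
    finally show ?thesis .
  qed
  have ybound: "(cmod (y r))\<^sup>2 \<le> 2 * (Kb * Kg)\<^sup>2 * (d r)\<^sup>2 + 2 * (Kc * Kg)\<^sup>2 * (d (r - 1))\<^sup>2" if r: "r \<ge> 1" for r
  proof -
    have t1: "cmod (- bs (per k r) * complex_of_real (d r) * g (Suc r)) \<le> Kb * Kg * d r"
    proof -
      have "cmod (- bs (per k r) * complex_of_real (d r) * g (Suc r)) = cmod (bs (per k r)) * d r * cmod (g (Suc r))"
        using d0[of r] by (simp add: norm_mult)
      also have "\<dots> \<le> Kb * d r * Kg" using Kb_le d0[of r] gb Kb_nonneg by (intro mult_mono) auto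
      finally show ?thesis by (simp add: algebra_simps)
    qed
    have t2: "cmod (cs (per k (r - 1)) * complex_of_real (d (r - 1)) * g (r - 1)) \<le> Kc * Kg * d (r - 1)"
    proof -
      have "cmod (cs (per k (r - 1)) * complex_of_real (d (r - 1)) * g (r - 1)) = cmod (cs (per k (r - 1))) * d (r - 1) * cmod (g (r - 1))"
        using d0[of "r - 1"] by (simp add: norm_mult)
      also have "\<dots> \<le> Kc * d (r - 1) * Kg" using Kc_le d0[of "r - 1"] gb Kc_nonneg by (intro mult_mono) auto
      finally show ?thesis by (simp add: algebra_simps)
    qed
    have "(cmod (y r))\<^sup>2 \<le> 2 * (cmod (- bs (per k r) * complex_of_real (d r) * g (Suc r)))\<^sup>2 + 2 * (cmod (cs (per k (r - 1)) * complex_of_real (d (r - 1)) * g (r - 1)))\<^sup>2"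
      unfolding yrow[OF r] by (rule sq_sum_le)
    also have "\<dots> \<le> 2 * (Kb * Kg * d r)\<^sup>2 + 2 * (Kc * Kg * d (r - 1))\<^sup>2"
      using t1 t2 by (intro add_mono mult_left_mono power_mono) auto
    finally show ?thesis by (simp add: power_mult_distrib)
  qed
  have l2y: "l2 y"
    unfolding l2_def
  proof (rule summable_comparison_test'[where N = 1])
    show "summable (\<lambda>r. 2 * (Kb * Kg)\<^sup>2 * (d r)\<^sup>2 + 2 * (Kc * Kg)\<^sup>2 * (d (r - 1))\<^sup>2)"
    proof (intro summable_add summable_mult)
      show "summable (\<lambda>r. (d r)\<^sup>2)" by (rule sd)
      have "summable (\<lambda>r. (d (Suc r - 1))\<^sup>2)" using sd by simp
      then show "summable (\<lambda>r. (d (r - 1))\<^sup>2)" by (subst summable_Suc_iff[symmetric])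
    qed
    show "norm ((cmod (y n))\<^sup>2) \<le> 2 * (Kb * Kg)\<^sup>2 * (d n)\<^sup>2 + 2 * (Kc * Kg)\<^sup>2 * (d (n - 1))\<^sup>2" if "1 \<le> n" for n
      using ybound[OF that] by simp
  qed
  have ylim: "(\<lambda>r. cmod (y r)) \<longlonglongrightarrow> 0" by (rule l2_lim[OF l2y])
  have Xlim: "(\<lambda>r. cmod (X r)) \<longlonglongrightarrow> 0"
  proof (rule Lim_null_comparison[where g = "\<lambda>r. Kg * \<Phi> r"])
    show "\<forall>\<^sub>F r in sequentially. norm (cmod (X r)) \<le> Kg * \<Phi> r"
    proof (rule always_eventually, rule allI)
      fix r
      have "cmod (X r) = \<Phi> r * cmod (g r)" unfolding X_def using \<Phi>0[of r] by (simp add: norm_mult)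
      also have "\<dots> \<le> \<Phi> r * Kg" by (rule mult_left_mono[OF gb \<Phi>0])
      finally show "norm (cmod (X r)) \<le> Kg * \<Phi> r" by (simp add: mult.commute)
    qed
    have "(\<lambda>r. Kg * \<Phi> r) \<longlonglongrightarrow> Kg * 0" by (intro tendsto_intros \<Phi>lim)
    then show "(\<lambda>r. Kg * \<Phi> r) \<longlonglongrightarrow> 0" by simp
  qed
  define xs where "xs N i = (if i < N then X i else 0)" for N i
  have l2xs: "\<forall>N. l2 (xs N)"
  proof
    fix N show "l2 (xs N)" unfolding l2_def xs_def by (rule summable_finite[of "{..<N}"]) auto
  qed
  define Kd where "Kd = Ka + cmod a + cmod \<mu> + Kb + Kc"
  have Kd0: "Kd \<ge> 0" unfolding Kd_def using Ka_nonneg Kb_nonneg Kc_nonneg norm_ge_zero[of a] norm_ge_zero[of \<mu>] by linarith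
  define M where "M N = cmod (X (N - 2)) + cmod (X (N - 1)) + cmod (X N) + cmod (X (Suc N))" for N
  define V where "V N = Kd * (3 * M N) + cmod (y (N - 1)) + cmod (y N)" for N
  define hh where "hh N r = (if r = N - 1 then (V N)\<^sup>2 else 0) + (if r = N then (V N)\<^sup>2 else 0) + (if Suc N \<le> r then (cmod (y r))\<^sup>2 else 0)" for N r
  have hh0: "0 \<le> hh N r" for N r unfolding hh_def by simp
  have xsM: "cmod (xs N i) \<le> M N" if "N - 2 \<le> i" for N i
  proof (cases "i < N")
    case True
    then have "i = N - 2 \<or> i = N - 1" using that by linarith
    then show ?thesis unfolding xs_def M_def using True by auto
  next
    case False
    then show ?thesis unfolding xs_def M_def by simp
  qed
  have pw: "(cmod (?L (xs N) r - y r))\<^sup>2 \<le> hh N r" for N r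
  proof -
    consider (a) "Suc r < N" | (b) "Suc N \<le> r" | (c) "r = N - 1 \<or> r = N" by linarith
    then show ?thesis
    proof cases
      case a
      have "?L (xs N) r = ?L X r" by (rule Lop_local) (use a in \<open>auto simp: xs_def\<close>)
      then show ?thesis using hh0 unfolding y_def by simp
    next
      case b
      have "?L (xs N) r = ?L (\<lambda>_. 0) r" by (rule Lop_local) (use b in \<open>auto simp: xs_def\<close>)
      then have "?L (xs N) r = 0" by (simp add: Lop_zero)
      then show ?thesis unfolding hh_def using b by simp
    next
      case c
      have "cmod (?L (xs N) r) \<le> Kd * (cmod (xs N (r - 1)) + cmod (xs N r) + cmod (xs N (Suc r)))"
        unfolding Kd_def by (rule Lop_bound)
      also have "\<dots> \<le> Kd * (3 * M N)"
      proof (rule mult_left_mono[OF _ Kd0])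
        have a1: "cmod (xs N (r - 1)) \<le> M N" by (rule xsM) (use c in auto)
        have a2: "cmod (xs N (r)) \<le> M N" by (rule xsM) (use c in auto)
        have a3: "cmod (xs N (Suc r)) \<le> M N" by (rule xsM) (use c in auto)
        show "cmod (xs N (r - 1)) + cmod (xs N r) + cmod (xs N (Suc r)) \<le> 3 * M N" using a1 a2 a3 by linarith
      qed
      finally have e1: "cmod (?L (xs N) r) \<le> Kd * (3 * M N)" .
      have e2: "cmod (y r) \<le> cmod (y (N - 1)) + cmod (y N)" using c by auto
      have "cmod (?L (xs N) r - y r) \<le> cmod (?L (xs N) r) + cmod (y r)" by (rule norm_triangle_ineq4)
      also have "\<dots> \<le> V N" unfolding V_def using e1 e2 by simp
      finally have "(cmod (?L (xs N) r - y r))\<^sup>2 \<le> (V N)\<^sup>2" by (intro power_mono) auto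
      also have "\<dots> \<le> hh N r" unfolding hh_def using c by auto
      finally show ?thesis .
    qed
  qed
  have ytail: "summable (\<lambda>r. if Suc N \<le> r then (cmod (y r))\<^sup>2 else 0)" for N
    by (rule summable_comparison_test'[where g = "\<lambda>r. (cmod (y r))\<^sup>2" and N = 0]) (use l2y in \<open>auto simp: l2_def\<close>)
  have shh: "summable (hh N)" for N
    unfolding hh_def[abs_def]
    by (intro summable_add ytail summable_finite[of "{N - 1}"] summable_finite[of "{N}"]) auto
  have suh: "suminf (hh N) = 2 * (V N)\<^sup>2 + suminf (\<lambda>r. if Suc N \<le> r then (cmod (y r))\<^sup>2 else 0)" for N
  proof -
    have s1: "(\<lambda>r. if r = N - 1 then (V N)\<^sup>2 else 0) sums (V N)\<^sup>2" using sums_single[of "N - 1" "\<lambda>_. (V N)\<^sup>2"] by simp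
    have s2: "(\<lambda>r. if r = N then (V N)\<^sup>2 else 0) sums (V N)\<^sup>2" using sums_single[of N "\<lambda>_. (V N)\<^sup>2"] by simp
    have "hh N sums ((V N)\<^sup>2 + (V N)\<^sup>2 + suminf (\<lambda>r. if Suc N \<le> r then (cmod (y r))\<^sup>2 else 0))"
      unfolding hh_def[abs_def] by (intro sums_add s1 s2 summable_sums ytail)
    then show ?thesis by (simp add: sums_iff)
  qed
  have Vlim: "V \<longlonglongrightarrow> 0"
  proof -
    have "M \<longlonglongrightarrow> 0 + 0 + 0 + 0" unfolding M_def[abs_def]
      by (intro tendsto_add lim_shift_minus Xlim LIMSEQ_Suc)
    then have "V \<longlonglongrightarrow> Kd * (3 * 0) + 0 + 0" unfolding V_def[abs_def]
      by (intro tendsto_add tendsto_mult tendsto_const lim_shift_minus ylim) simp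
    then show ?thesis by simp
  qed
  have Tlim: "(\<lambda>N. suminf (\<lambda>r. if Suc N \<le> r then (cmod (y r))\<^sup>2 else 0)) \<longlonglongrightarrow> 0"
    using LIMSEQ_Suc[OF tail_tendsto[of "\<lambda>r. (cmod (y r))\<^sup>2"]] l2y unfolding l2_def by simp
  have hlim: "(\<lambda>N. suminf (hh N)) \<longlonglongrightarrow> 0"
  proof -
    have "(\<lambda>N. 2 * (V N)\<^sup>2 + suminf (\<lambda>r. if Suc N \<le> r then (cmod (y r))\<^sup>2 else 0)) \<longlonglongrightarrow> 2 * 0\<^sup>2 + 0"
      by (intro tendsto_intros Vlim Tlim)
    then show ?thesis unfolding suh by simp
  qed
  have conv: "(\<lambda>N. l2norm (\<lambda>i. ?L (xs N) i - y i)) \<longlonglongrightarrow> 0"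
    by (rule l2norm_lim[OF pw shh hlim])
  obtain x' where l2x': "l2 x'" and Lx': "?L x' = y" using C2[OF l2xs l2y conv] by blast
  define h' where "h' i = x' i - X i" for i
  have homh: "Rrow k as bs cs \<mu> h' r = 0" if r: "r \<ge> 1" for r
  proof -
    have "Rrow k as bs cs \<mu> h' r = Rrow k as bs cs \<mu> x' r - Rrow k as bs cs \<mu> X r"
      unfolding h'_def[abs_def] by (rule Rrow_diff)
    also have "\<dots> = ?L x' r - ?L X r" using Lop_row[OF r] by simp
    finally show ?thesis unfolding Lx' y_def by simp
  qed
  define \<omega>g where "\<omega>g = W u g 0"
  define \<omega>h where "\<omega>h = W u h' 0"
  have Wg: "W u g r = \<omega>g" for r unfolding \<omega>g_def by (rule W_const[OF homg homu])
  have Wh: "W u h' r = \<omega>h" for r unfolding \<omega>h_def by (rule W_const[OF homh homu])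
  define \<beta> where "\<beta> r = bs (per k r) * u r * complex_of_real (d r) * g (Suc r)" for r
  have WX: "W u X r = complex_of_real (\<Phi> r) * W u g r - \<beta> r" for r
    unfolding W_def X_def d_def \<beta>_def by (simp add: algebra_simps)
  have Wsum: "W u x' r = W u X r + W u h' r" for r unfolding W_def h'_def by (simp add: algebra_simps)
  have eq: "W u x' r = complex_of_real (\<Phi> r) * \<omega>g - \<beta> r + \<omega>h" for r
    unfolding Wsum WX Wg Wh ..
  have \<beta>b: "cmod (\<beta> r) \<le> Kb * Ku * Kg * d r" for r
  proof -
    have "cmod (\<beta> r) = cmod (bs (per k r)) * cmod (u r) * d r * cmod (g (Suc r))"
      unfolding \<beta>_def using d0[of r] by (simp add: norm_mult)
    also have "\<dots> \<le> Kb * Ku * d r * Kg"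
      using Kb_le[of r] ub[of r] gb[of "Suc r"] d0[of r] Kb_nonneg Ku0
      by (intro mult_mono) (auto intro: mult_nonneg_nonneg)
    finally show ?thesis by (simp add: algebra_simps)
  qed
  have \<beta>lim: "\<beta> \<longlonglongrightarrow> 0"
  proof (rule Lim_null_comparison[where g = "\<lambda>r. Kb * Ku * Kg * d r"])
    show "\<forall>\<^sub>F r in sequentially. norm (\<beta> r) \<le> Kb * Ku * Kg * d r" using \<beta>b by simp
    have "(\<lambda>r. Kb * Ku * Kg * d r) \<longlonglongrightarrow> Kb * Ku * Kg * 0" by (intro tendsto_intros dlim)
    then show "(\<lambda>r. Kb * Ku * Kg * d r) \<longlonglongrightarrow> 0" by simp
  qed
  have x'lim: "(\<lambda>r. cmod (x' r)) \<longlonglongrightarrow> 0" by (rule l2_lim[OF l2x'])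
  have Wb: "cmod (W u x' r) \<le> Kb * Ku * cmod (x' (Suc r)) + Kc * Ku * cmod (x' r)" for r
  proof -
    have "cmod (W u x' r) \<le> cmod (bs (per k r) * u r * x' (Suc r)) + cmod (cs (per k r) * u (Suc r) * x' r)"
      unfolding W_def by (rule norm_triangle_ineq4)
    also have "\<dots> \<le> Kb * Ku * cmod (x' (Suc r)) + Kc * Ku * cmod (x' r)"
      unfolding norm_mult using Kb_le[of r] Kc_le[of r] ub[of r] ub[of "Suc r"] Kb_nonneg Kc_nonneg Ku0
      by (intro add_mono mult_right_mono mult_mono) auto
    finally show ?thesis .
  qed
  have Wlim: "(\<lambda>r. W u x' r) \<longlonglongrightarrow> 0"
  proof (rule Lim_null_comparison[where g = "\<lambda>r. Kb * Ku * cmod (x' (Suc r)) + Kc * Ku * cmod (x' r)"])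
    show "\<forall>\<^sub>F r in sequentially. norm (W u x' r) \<le> Kb * Ku * cmod (x' (Suc r)) + Kc * Ku * cmod (x' r)"
      using Wb by simp
    have "(\<lambda>r. Kb * Ku * cmod (x' (Suc r)) + Kc * Ku * cmod (x' r)) \<longlonglongrightarrow> Kb * Ku * 0 + Kc * Ku * 0"
      by (intro tendsto_intros LIMSEQ_Suc x'lim)
    then show "(\<lambda>r. Kb * Ku * cmod (x' (Suc r)) + Kc * Ku * cmod (x' r)) \<longlonglongrightarrow> 0" by simp
  qed
  have \<Phi>clim: "(\<lambda>r. complex_of_real (\<Phi> r)) \<longlonglongrightarrow> 0"
    using tendsto_of_real[OF \<Phi>lim, where 'a = complex] by simp
  have \<omega>h0: "\<omega>h = 0"
  proof -
    have "(\<lambda>r. W u x' r - complex_of_real (\<Phi> r) * \<omega>g + \<beta> r) \<longlonglongrightarrow> 0 - 0 * \<omega>g + 0"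
      by (intro tendsto_intros Wlim \<Phi>clim \<beta>lim)
    moreover have "(\<lambda>r. W u x' r - complex_of_real (\<Phi> r) * \<omega>g + \<beta> r) = (\<lambda>r. \<omega>h)"
      using eq by (simp add: algebra_simps)
    ultimately show ?thesis by (simp add: LIMSEQ_const_iff)
  qed
  have notsum: "\<not> summable (\<lambda>m. (phi m)\<^sup>2 * c)" if c: "c \<noteq> 0" for c :: real
  proof
    assume "summable (\<lambda>m. (phi m)\<^sup>2 * c)"
    then have "summable (\<lambda>m. (phi m)\<^sup>2 * c * inverse c)" by (rule summable_mult2)
    then show False using c phi_not_summable by (simp add: mult.assoc)
  qed
  show False
  proof (cases "\<omega>g = 0")
    case False
    have sq2: "summable (\<lambda>r. 2 * (cmod (W u x' r))\<^sup>2 + 2 * (cmod (\<beta> r))\<^sup>2)"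
    proof (intro summable_add summable_mult)
      show "summable (\<lambda>r. (cmod (W u x' r))\<^sup>2)"
      proof (rule summable_comparison_test'[where N = 0])
        show "summable (\<lambda>r. 2 * (Kb * Ku)\<^sup>2 * (cmod (x' (Suc r)))\<^sup>2 + 2 * (Kc * Ku)\<^sup>2 * (cmod (x' r))\<^sup>2)"
          using l2x' summable_Suc_iff[of "\<lambda>i. (cmod (x' i))\<^sup>2"] unfolding l2_def by (intro summable_add summable_mult) auto
        fix r :: nat
        have "(cmod (W u x' r))\<^sup>2 \<le> (Kb * Ku * cmod (x' (Suc r)) + Kc * Ku * cmod (x' r))\<^sup>2"
          using Wb[of r] by (intro power_mono) auto
        also have "\<dots> \<le> 2 * (Kb * Ku * cmod (x' (Suc r)))\<^sup>2 + 2 * (Kc * Ku * cmod (x' r))\<^sup>2" by (rule sq_sum_real)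
        finally show "norm ((cmod (W u x' r))\<^sup>2) \<le> 2 * (Kb * Ku)\<^sup>2 * (cmod (x' (Suc r)))\<^sup>2 + 2 * (Kc * Ku)\<^sup>2 * (cmod (x' r))\<^sup>2"
          by (simp add: power_mult_distrib)
      qed
      show "summable (\<lambda>r. (cmod (\<beta> r))\<^sup>2)"
      proof (rule summable_comparison_test'[where N = 0])
        show "summable (\<lambda>r. (Kb * Ku * Kg)\<^sup>2 * (d r)\<^sup>2)" by (intro summable_mult sd)
        fix r :: nat
        have "(cmod (\<beta> r))\<^sup>2 \<le> (Kb * Ku * Kg * d r)\<^sup>2" using \<beta>b[of r] by (intro power_mono) auto
        then show "norm ((cmod (\<beta> r))\<^sup>2) \<le> (Kb * Ku * Kg)\<^sup>2 * (d r)\<^sup>2" by (simp add: power_mult_distrib)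
      qed
    qed
    have "summable (\<lambda>r. (\<Phi> r)\<^sup>2 * (cmod \<omega>g)\<^sup>2)"
    proof (rule summable_comparison_test'[OF sq2, where N = 0])
      fix r :: nat
      have "complex_of_real (\<Phi> r) * \<omega>g = W u x' r + \<beta> r" using eq[of r] \<omega>h0 by simp
      then have "(\<Phi> r)\<^sup>2 * (cmod \<omega>g)\<^sup>2 = (cmod (W u x' r + \<beta> r))\<^sup>2"
        using \<Phi>0[of r] by (metis norm_mult norm_of_real abs_of_nonneg power_mult_distrib)
      also have "\<dots> \<le> 2 * (cmod (W u x' r))\<^sup>2 + 2 * (cmod (\<beta> r))\<^sup>2" by (rule sq_sum_le)
      finally show "norm ((\<Phi> r)\<^sup>2 * (cmod \<omega>g)\<^sup>2) \<le> 2 * (cmod (W u x' r))\<^sup>2 + 2 * (cmod (\<beta> r))\<^sup>2" by simp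
    qed
    then have "summable (\<lambda>m. (\<Phi> (m * k + 0))\<^sup>2 * (cmod \<omega>g)\<^sup>2)"
      by (rule summable_sub[OF _ _ k1]) simp
    then have "summable (\<lambda>m. (phi m)\<^sup>2 * (cmod \<omega>g)\<^sup>2)" using \<Phi>mk[of 0] k1 by simp
    then show False using notsum[of "(cmod \<omega>g)\<^sup>2"] False by simp
  next
    case True
    have p0: "per k 0 = 1" unfolding per_def by simp
    have b1: "bs 1 \<noteq> 0" using bsp[of 0] p0 by simp
    have c1: "cs 1 \<noteq> 0" using csp[of 0] p0 by simp
    have e1: "bs 1 * u 0 * g 1 - cs 1 * u 1 * g 0 = 0" using True unfolding \<omega>g_def W_def p0 by simp
    have e2: "bs 1 * u 0 * h' 1 - cs 1 * u 1 * h' 0 = 0" using \<omega>h0 unfolding \<omega>h_def W_def p0 by simp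
    obtain \<alpha> where \<alpha>: "h' 0 = \<alpha> * g 0" "h' 1 = \<alpha> * g 1"
      using two_dim[OF b1 c1 u01 g01 e1 e2] by blast
    have hg: "h' i = \<alpha> * g i" for i
    proof -
      have "h' i = xs_of (h' 0, h' 1) i" by (rule hom_unique[OF homh])
      also have "(h' 0, h' 1) = lc \<alpha> 0 (g 0, g 1) (g 0, g 1)" unfolding lc_def \<alpha> by simp
      also have "xs_of (lc \<alpha> 0 (g 0, g 1) (g 0, g 1)) i = \<alpha> * xs_of (g 0, g 1) i" by (simp add: xs_lc)
      also have "xs_of (g 0, g 1) i = g i" by (rule hom_unique[OF homg, symmetric])
      finally show ?thesis .
    qed
    have x'e: "x' i = (complex_of_real (\<Phi> i) + \<alpha>) * g i" for i
      using hg[of i] unfolding h'_def X_def by (simp add: algebra_simps)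
    have "summable (\<lambda>m. (cmod (x' (m * k + j0)))\<^sup>2)"
      using l2x' unfolding l2_def by (rule summable_sub[OF _ _ k1]) simp
    moreover have "(cmod (x' (m * k + j0)))\<^sup>2 = (cmod (complex_of_real (phi m) + \<alpha>))\<^sup>2 * \<gamma>0\<^sup>2" for m
      unfolding x'e \<Phi>mk[OF j0] norm_mult gj by (simp add: power_mult_distrib)
    ultimately have sm: "summable (\<lambda>m. (cmod (complex_of_real (phi m) + \<alpha>))\<^sup>2 * \<gamma>0\<^sup>2)" by simp
    have "(\<lambda>m. (cmod (complex_of_real (phi m) + \<alpha>))\<^sup>2 * \<gamma>0\<^sup>2 * inverse (\<gamma>0\<^sup>2)) \<longlonglongrightarrow> 0 * inverse (\<gamma>0\<^sup>2)"
      by (intro tendsto_intros summable_LIMSEQ_zero[OF sm])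
    then have "(\<lambda>m. (cmod (complex_of_real (phi m) + \<alpha>))\<^sup>2) \<longlonglongrightarrow> 0" using \<gamma>0 by simp
    then have "(\<lambda>m. sqrt ((cmod (complex_of_real (phi m) + \<alpha>))\<^sup>2)) \<longlonglongrightarrow> sqrt 0" by (intro tendsto_intros)
    then have "(\<lambda>m. cmod (complex_of_real (phi m) + \<alpha>)) \<longlonglongrightarrow> 0" by simp
    then have l0: "(\<lambda>m. complex_of_real (phi m) + \<alpha>) \<longlonglongrightarrow> 0" by (simp add: tendsto_norm_zero_iff)
    have "(\<lambda>m. complex_of_real (phi m) + \<alpha>) \<longlonglongrightarrow> 0 + \<alpha>"
      by (intro tendsto_intros) (use tendsto_of_real[OF phi_lim, where 'a = complex] in simp)
    then have "\<alpha> = 0" using LIMSEQ_unique[OF l0] by simp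
    then have "summable (\<lambda>m. (phi m)\<^sup>2 * \<gamma>0\<^sup>2)" using sm phi_nonneg by simp
    then show False using notsum[of "\<gamma>0\<^sup>2"] \<gamma>0 by simp
  qed
qed

end

definition bl :: "nat \<Rightarrow> complex \<Rightarrow> complex vec \<Rightarrow> nat \<Rightarrow> complex" where
  "bl k \<nu> v i = \<nu> ^ (i div k) * v $ (i mod k)"

lemma bl_shift: "k \<ge> 1 \<Longrightarrow> bl k \<nu> v (i + k) = \<nu> * bl k \<nu> v i"
  unfolding bl_def by simp

lemma bl_at: "j < k \<Longrightarrow> bl k \<nu> v (m * k + j) = \<nu> ^ m * v $ j"
  unfolding bl_def by simp

lemma bl_vec: "v \<in> carrier_vec k \<Longrightarrow> vec k (bl k \<nu> v) = v"
  by (intro eq_vecI) (auto simp: bl_def)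

lemma bl_norm: "cmod \<nu> = 1 \<Longrightarrow> cmod (bl k \<nu> v i) = cmod (v $ (i mod k))"
  unfolding bl_def by (simp add: norm_mult norm_power)

lemma bl_bound: "k \<ge> 1 \<Longrightarrow> cmod \<nu> = 1 \<Longrightarrow> cmod (bl k \<nu> v i) \<le> (\<Sum>j<k. cmod (v $ j))"
  unfolding bl_norm by (intro member_le_sum) auto

lemma vec_nz: fixes v :: "complex vec" assumes "v \<in> carrier_vec k" "v \<noteq> 0\<^sub>v k" shows "\<exists>j<k. v $ j \<noteq> 0"
proof (rule ccontr)
  assume "\<not> (\<exists>j<k. v $ j \<noteq> 0)"
  then have "v = 0\<^sub>v k" using assms(1) by (intro eq_vecI) auto
  then show False using assms(2) by simp
qed

lemma Tpert_tr_swap: "Tpert_tr k a as bs cs = Tpert k a as cs bs"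
  unfolding Tpert_tr_def Tpert_def by simp

lemma ess_Lop: "\<mu> \<in> ess_spec (Tpert k a as bs cs) \<longleftrightarrow> \<not> fredholm_l2 (Lop k a as bs cs \<mu>)"
proof -
  have "(\<lambda>x i. Tpert k a as bs cs x i - \<mu> * x i) = Lop k a as bs cs \<mu>" by (simp add: Lop_def[abs_def])
  then show ?thesis unfolding ess_spec_def by simp
qed

context tri
begin

lemma tri_self: "tri k bs cs" by (rule tri.intro) (use k1 bnz cnz in auto)

lemma degen:
  assumes w1: "cmod w = 1" and D0: "det (Sm k as bs cs \<mu> w) = 0"
  shows "\<mu> \<in> ess_spec (Tpert k a as bs cs)"
proof -
  have w0: "w \<noteq> 0" using w1 by auto
  obtain v where v: "v \<in> carrier_vec k" "v \<noteq> 0\<^sub>v k" "Sm k as bs cs \<mu> w *\<^sub>v v = 0\<^sub>v k"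
    using det_0_iff_vec_prod_zero[OF Sm_carrier] D0 by blast
  define g where "g = bl k (1 / w) v"
  have nu0: "1 / w \<noteq> 0" using w0 by simp
  have gsh: "g (i + k) = (1 / w) * g i" for i unfolding g_def by (rule bl_shift[OF k1])
  have homg: "\<And>r. r \<ge> 1 \<Longrightarrow> Rrow k as bs cs \<mu> g r = 0"
    using bloch_iff[where x = g and k = k and \<nu> = "1 / w" and as = as and bs = bs and cs = cs and \<mu> = \<mu>, OF k1 nu0 gsh]
      v(3) bl_vec[OF v(1)] w0 unfolding g_def by simp
  obtain j0 where j0: "j0 < k" "v $ j0 \<noteq> 0" using vec_nz[OF v(1,2)] by blast
  have nw: "cmod (1 / w) = 1" using w1 by (simp add: norm_divide)
  have gj: "cmod (g (m * k + j0)) = cmod (v $ j0)" for m unfolding g_def bl_norm[OF nw] using j0 by simp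
  have gb: "cmod (g i) \<le> (\<Sum>j<k. cmod (v $ j))" for i unfolding g_def by (rule bl_bound[OF k1 nw])
  have g01: "(g 0, g 1) \<noteq> (0, 0)"
  proof
    assume "(g 0, g 1) = (0, 0)"
    then have "g j0 = 0" using hom_zero[OF homg] by simp
    moreover have "g j0 = v $ j0" unfolding g_def bl_def using j0 by simp
    ultimately show False using j0 by simp
  qed
  have D0': "det (Sm k as cs bs \<mu> (1 / w)) = 0" using det_Sm_transpose[OF nu0, of k as cs bs \<mu>] D0 by simp
  obtain v' where v': "v' \<in> carrier_vec k" "v' \<noteq> 0\<^sub>v k" "Sm k as cs bs \<mu> (1 / w) *\<^sub>v v' = 0\<^sub>v k"
    using det_0_iff_vec_prod_zero[OF Sm_carrier] D0' by blast
  define u where "u = bl k w v'"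
  have ush: "u (i + k) = w * u i" for i unfolding u_def by (rule bl_shift[OF k1])
  have homu: "\<And>r. r \<ge> 1 \<Longrightarrow> Rrow k as cs bs \<mu> u r = 0"
    using bloch_iff[where x = u and k = k and \<nu> = w and as = as and bs = cs and cs = bs and \<mu> = \<mu>, OF k1 w0 ush]
      v'(3) bl_vec[OF v'(1)] unfolding u_def by simp
  have ub: "cmod (u i) \<le> (\<Sum>j<k. cmod (v' $ j))" for i unfolding u_def by (rule bl_bound[OF k1 w1])
  obtain j1 where j1: "j1 < k" "v' $ j1 \<noteq> 0" using vec_nz[OF v'(1,2)] by blast
  have tsw: "tri k cs bs" by (rule tri_swap[OF tri_self])
  have u01: "(u 0, u 1) \<noteq> (0, 0)"
  proof
    assume "(u 0, u 1) = (0, 0)"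
    then have "u j1 = 0" using tri.hom_zero[OF tsw, of as \<mu> u] homu by simp
    moreover have "u j1 = v' $ j1" unfolding u_def bl_def using j1 by simp
    ultimately show False using j1 by simp
  qed
  have "\<not> fredholm_l2 (Lop k a as bs cs \<mu>)"
    by (rule no_fredholm[OF homg homu gb ub gj _ _ g01 u01]) (use j0 in simp_all)
  then show ?thesis by (simp add: ess_Lop)
qed

end

theorem theorem4p2:
  fixes k :: nat and as bs cs :: "nat \<Rightarrow> complex" and \<mu> :: complex
  assumes "k \<ge> 1"
    and "(\<Prod>j=1..k. cs j) \<noteq> 0" and "(\<Prod>j=1..k. bs j) \<noteq> 0"
  shows "(Re (total_wind k as bs cs \<mu>) < 0 \<longrightarrow>
           (\<exists>C>0. \<forall>a. \<mu> \<notin> ess_spec (Tpert k a as bs cs) \<longrightarrow>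
              (\<exists>x \<rho>. l2 x \<and> x \<noteq> (\<lambda>_. 0) \<and> Tpert k a as bs cs x = (\<lambda>i. \<mu> * x i)
                     \<and> \<rho> < 1 \<and> decay_bound k C \<rho> x)))
       \<and> (Re (total_wind k as bs cs \<mu>) > 0 \<longrightarrow>
           (\<exists>C>0. \<forall>a. \<mu> \<notin> ess_spec (Tpert k a as bs cs) \<longrightarrow>
              (\<exists>y \<rho>. l2 y \<and> y \<noteq> (\<lambda>_. 0) \<and> Tpert_tr k a as bs cs y = (\<lambda>i. \<mu> * y i)
                     \<and> \<rho> < 1 \<and> decay_bound k C \<rho> y)))"
proof -
  have bnz: "bs j \<noteq> 0" if "1 \<le> j" "j \<le> k" for j
    using assms(3) that by (metis atLeastAtMost_iff finite_atLeastAtMost prod_zero_iff)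
  have cnz: "cs j \<noteq> 0" if "1 \<le> j" "j \<le> k" for j
    using assms(2) that by (metis atLeastAtMost_iff finite_atLeastAtMost prod_zero_iff)
  interpret T: tri k as bs cs \<mu> by unfold_locales (use assms(1) bnz cnz in auto)
  interpret T2: tri k as cs bs \<mu> by unfold_locales (use assms(1) bnz cnz in auto)
  obtain A B C where ABC: "\<forall>z. z \<noteq> 0 \<longrightarrow> det (Sm k as bs cs \<mu> z) = A / z + B + C * z"
    using det_laurent[OF assms(1)] by blast
  define Dl where "Dl = (\<lambda>z::complex. A / z + B + C * z)"
  have DD: "z \<noteq> 0 \<Longrightarrow> det (Sm k as bs cs \<mu> z) = Dl z" for z using ABC unfolding Dl_def by simp
  have TW: "total_wind k as bs cs \<mu> = winding_number (Dl \<circ> circlepath 0 1) 0"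
  proof -
    have "(\<lambda>t. det (symbol k as bs cs (exp (2 * of_real pi * \<i> * of_real t)) - \<mu> \<cdot>\<^sub>m 1\<^sub>m k)) = Dl \<circ> circlepath 0 1"
    proof
      fix t :: real
      have "det (symbol k as bs cs (exp (2 * of_real pi * \<i> * of_real t)) - \<mu> \<cdot>\<^sub>m 1\<^sub>m k)
          = det (Sm k as bs cs \<mu> (exp (2 * of_real pi * \<i> * of_real t)))" unfolding Sm_def ..
      also have "\<dots> = Dl (exp (2 * of_real pi * \<i> * of_real t))" by (rule DD) simp
      finally show "det (symbol k as bs cs (exp (2 * of_real pi * \<i> * of_real t)) - \<mu> \<cdot>\<^sub>m 1\<^sub>m k) = (Dl \<circ> circlepath 0 1) t"
        by (simp add: circlepath)
    qed
    then show ?thesis unfolding total_wind_def by simp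
  qed
  have Tsw: "Tpert_tr k a as bs cs = Tpert k a as cs bs" for a by (rule Tpert_tr_swap)
  have Dsw: "det (Sm k as cs bs \<mu> w) = Dl (1 / w)" if "w \<noteq> 0" for w
    using det_Sm_transpose[OF that, of k as cs bs \<mu>] DD[of "1 / w"] that by simp
  show ?thesis
  proof (cases "\<exists>w. cmod w = 1 \<and> Dl w = 0")
    case True
    then obtain w where w: "cmod w = 1" "Dl w = 0" by blast
    have w0: "w \<noteq> 0" using w by auto
    have e1: "\<mu> \<in> ess_spec (Tpert k a as bs cs)" for a
      using T.degen[OF w(1)] DD[OF w0] w(2) by simp
    have e2: "\<mu> \<in> ess_spec (Tpert k a as cs bs)" for a
    proof (rule T2.degen)
      show "cmod (1 / w) = 1" using w by (simp add: norm_divide)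
      show "det (Sm k as cs bs \<mu> (1 / w)) = 0" using Dsw[of "1 / w"] w w0 by simp
    qed
    show ?thesis using e1 e2 by (auto simp: Tsw intro!: exI[of _ "1::real"])
  next
    case False
    then have nz: "\<And>z. cmod z = 1 \<Longrightarrow> Dl z \<noteq> 0" by blast
    have WL: "(Re (winding_number (Dl \<circ> circlepath 0 1) 0) < 0 \<longrightarrow> (\<forall>w. w \<noteq> 0 \<and> Dl w = 0 \<longrightarrow> 1 < cmod w))
       \<and> (Re (winding_number (Dl \<circ> circlepath 0 1) 0) > 0 \<longrightarrow> (\<forall>w. w \<noteq> 0 \<and> Dl w = 0 \<longrightarrow> cmod w < 1))"
      using wind_laurent[of A B C] nz unfolding Dl_def by blast
    show ?thesis
    proof (intro conjI impI)
      assume neg: "Re (total_wind k as bs cs \<mu>) < 0"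
      have Z: "\<And>w. w \<noteq> 0 \<Longrightarrow> det (Sm k as bs cs \<mu> w) = 0 \<Longrightarrow> 1 < cmod w"
        using WL neg unfolding TW using DD by auto
      obtain C where "C > 0" and H: "\<forall>a. \<exists>x \<rho>. l2 x \<and> x \<noteq> (\<lambda>_. 0) \<and> Tpert k a as bs cs x = (\<lambda>i. \<mu> * x i) \<and> \<rho> < 1 \<and> decay_bound k C \<rho> x"
        using T.main_eig[OF Z] by blast
      then show "\<exists>C>0. \<forall>a. \<mu> \<notin> ess_spec (Tpert k a as bs cs) \<longrightarrow>
              (\<exists>x \<rho>. l2 x \<and> x \<noteq> (\<lambda>_. 0) \<and> Tpert k a as bs cs x = (\<lambda>i. \<mu> * x i) \<and> \<rho> < 1 \<and> decay_bound k C \<rho> x)"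
        by blast
    next
      assume pos: "Re (total_wind k as bs cs \<mu>) > 0"
      have Z2: "\<And>w. w \<noteq> 0 \<Longrightarrow> det (Sm k as cs bs \<mu> w) = 0 \<Longrightarrow> 1 < cmod w"
      proof -
        fix w :: complex assume w0: "w \<noteq> 0" and d: "det (Sm k as cs bs \<mu> w) = 0"
        have "Dl (1 / w) = 0" using Dsw[OF w0] d by simp
        then have "cmod (1 / w) < 1" using WL pos w0 unfolding TW by auto
        then show "1 < cmod w" using w0 by (simp add: norm_divide divide_less_eq)
      qed
      obtain C where "C > 0" and H: "\<forall>a. \<exists>x \<rho>. l2 x \<and> x \<noteq> (\<lambda>_. 0) \<and> Tpert k a as cs bs x = (\<lambda>i. \<mu> * x i) \<and> \<rho> < 1 \<and> decay_bound k C \<rho> x"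
        using T2.main_eig[OF Z2] by blast
      then show "\<exists>C>0. \<forall>a. \<mu> \<notin> ess_spec (Tpert k a as bs cs) \<longrightarrow>
              (\<exists>y \<rho>. l2 y \<and> y \<noteq> (\<lambda>_. 0) \<and> Tpert_tr k a as bs cs y = (\<lambda>i. \<mu> * y i) \<and> \<rho> < 1 \<and> decay_bound k C \<rho> y)"
        unfolding Tsw by blast
    qed
  qed
qed

end
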